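(* There exists an absolute constant $c_2>0$ such that for every $k\ge1$ and $p\in[0,1]$: if $f_p(n,2n)<c_2$ for some $n\ge1$, then there is $c>0$ such that for every $m\ge1$, $\mathbf P_p\big[0\overset{\mathbb S_k}{\longleftrightarrow}\partial\overline{B_m}\big]\le e^{-cm}$.
   Context: $\mathbb S_k=\mathbb Z^2\times\{0,\dots,k\}$ with nearest-neighbour edges; $\mathbf P_p$ Bernoulli bond percolation. For $T\subset\mathbb Z^2$, $\overline T=T\times\{0,\dots,k\}$; $B_m=[-m,m]^2$; $\partial U$ is the set of vertices of $U$ with a neighbour outside $U$. $f_p(m,n)$ is the probability of an open path inside $\overline{[0,m]\times[0,n]}$ from $\overline{\{0\}\times[0,n]}$ to $\overline{\{m\}\times[0,n]}$. $0\overset{\mathbb S_k}{\longleftrightarrow}\partial\overline{B_m}$ is the event of an open path from the origin to $\partial\overline{B_m}$. *)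

theory Defs
  imports Complex_Main
begin

type_synonym vtx = "int \<times> int \<times> int"

definition in_slab :: "nat \<Rightarrow> vtx \<Rightarrow> bool" where
  "in_slab k v = (case v of (x, y, z) \<Rightarrow> 0 \<le> z \<and> z \<le> int k)"

definition adj :: "nat \<Rightarrow> vtx \<Rightarrow> vtx \<Rightarrow> bool" where
  "adj k u v = (in_slab k u \<and> in_slab k v \<and>
     (case u of (x1, y1, z1) \<Rightarrow> case v of (x2, y2, z2) \<Rightarrow>
        \<bar>x1 - x2\<bar> + \<bar>y1 - y2\<bar> + \<bar>z1 - z2\<bar> = 1))"

definition slab_edges :: "nat \<Rightarrow> vtx set \<Rightarrow> vtx set set" where
  "slab_edges k U = {{u, v} | u v. u \<in> U \<and> v \<in> U \<and> adj k u v}"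

definition bar :: "nat \<Rightarrow> (int \<times> int) set \<Rightarrow> vtx set" where
  "bar k T = {(x, y, z). (x, y) \<in> T \<and> 0 \<le> z \<and> z \<le> int k}"

definition box :: "int \<Rightarrow> (int \<times> int) set" where
  "box m = {-m..m} \<times> {-m..m}"

definition vboundary :: "nat \<Rightarrow> vtx set \<Rightarrow> vtx set" where
  "vboundary k U = {u \<in> U. \<exists>v. adj k u v \<and> v \<notin> U}"

definition open_path :: "vtx set set \<Rightarrow> vtx list \<Rightarrow> bool" where
  "open_path \<omega> xs = (xs \<noteq> [] \<and> (\<forall>i. Suc i < length xs \<longrightarrow> {xs ! i, xs ! Suc i} \<in> \<omega>))"

definition connects :: "vtx set set \<Rightarrow> vtx set \<Rightarrow> vtx set \<Rightarrow> bool" where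
  "connects \<omega> A B = (\<exists>xs. open_path \<omega> xs \<and> hd xs \<in> A \<and> last xs \<in> B)"

text \<open>Bernoulli bond percolation probability of an event depending only on the
  states of the (finitely many) edges in E: \<omega> is the set of open edges in E.\<close>
definition perc_prob :: "real \<Rightarrow> vtx set set \<Rightarrow> (vtx set set \<Rightarrow> bool) \<Rightarrow> real" where
  "perc_prob p E A = (\<Sum>\<omega> \<in> {\<omega>. \<omega> \<subseteq> E \<and> A \<omega>}. p ^ card \<omega> * (1 - p) ^ card (E - \<omega>))"

text \<open>f_p(m,n): open crossing inside [0,m]x[0,n]-bar from its left to its right side.\<close>
definition f_cross :: "nat \<Rightarrow> real \<Rightarrow> int \<Rightarrow> int \<Rightarrow> real" where
  "f_cross k p m n = perc_prob p (slab_edges k (bar k ({0..m} \<times> {0..n})))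
     (\<lambda>\<omega>. connects \<omega> (bar k ({0} \<times> {0..n})) (bar k ({m} \<times> {0..n})))"

text \<open>P_p[0 <-> boundary of B_m-bar]. Any open path from the origin to the boundary
  first hits the boundary after using only edges of B_m-bar, so the event is determined
  by those edges.\<close>
definition conn_prob :: "nat \<Rightarrow> real \<Rightarrow> int \<Rightarrow> real" where
  "conn_prob k p m = perc_prob p (slab_edges k (bar k (box m)))
     (\<lambda>\<omega>. connects \<omega> {(0, 0, 0)} (vboundary k (bar k (box m))))"

end

theory Submission
  imports Defs
begin


definition wt :: "real \<Rightarrow> vtx set set \<Rightarrow> vtx set set \<Rightarrow> real" where
  "wt p E \<omega> = p ^ card \<omega> * (1 - p) ^ card (E - \<omega>)"

lemma perc_prob_ind:
  assumes "finite E"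
  shows "perc_prob p E A = (\<Sum>\<omega>\<in>Pow E. if A \<omega> then wt p E \<omega> else 0)"
proof -
  have eq: "{\<omega>. \<omega> \<subseteq> E \<and> A \<omega>} = {\<omega>\<in>Pow E. A \<omega>}" by auto
  show ?thesis unfolding perc_prob_def wt_def eq
    by (rule sum.inter_filter) (simp add: assms)
qed

lemma wt_nonneg: "0 \<le> p \<Longrightarrow> p \<le> 1 \<Longrightarrow> 0 \<le> wt p E \<omega>"
  unfolding wt_def by simp

lemma sum_wt_one:
  assumes "finite S"
  shows "(\<Sum>\<omega>\<in>Pow S. wt p S \<omega>) = 1"
  using assms
proof (induction S rule: finite_induct)
  case empty
  then show ?case by (simp add: wt_def)
next
  case (insert a S)
  have fin: "finite (Pow S)" using insert by simp
  have disj: "Pow S \<inter> insert a ` Pow S = {}" using insert by auto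
  have inj: "inj_on (insert a) (Pow S)"
  proof (rule inj_onI)
    fix x y assume "x \<in> Pow S" "y \<in> Pow S" "insert a x = insert a y"
    then show "x = y" using insert(2) by (metis PowD in_mono insert_ident)
  qed
  have s1: "(\<Sum>\<omega>\<in>Pow S. wt p (insert a S) \<omega>) = (1 - p) * (\<Sum>\<omega>\<in>Pow S. wt p S \<omega>)"
    unfolding sum_distrib_left
  proof (rule sum.cong)
    fix \<omega> assume "\<omega> \<in> Pow S"
    then have "insert a S - \<omega> = insert a (S - \<omega>)" "a \<notin> S - \<omega>" using insert by auto
    then have "card (insert a S - \<omega>) = Suc (card (S - \<omega>))" using insert by simp
    then show "wt p (insert a S) \<omega> = (1 - p) * wt p S \<omega>" unfolding wt_def by simp
  qed simp
  have s2: "(\<Sum>\<omega>\<in>insert a ` Pow S. wt p (insert a S) \<omega>) = p * (\<Sum>\<omega>\<in>Pow S. wt p S \<omega>)"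
    unfolding sum.reindex[OF inj] sum_distrib_left
  proof (rule sum.cong)
    fix \<omega> assume "\<omega> \<in> Pow S"
    then have "insert a S - insert a \<omega> = S - \<omega>" "a \<notin> \<omega>" "finite \<omega>" using insert
      by (auto intro: finite_subset)
    then show "(wt p (insert a S) \<circ> insert a) \<omega> = p * wt p S \<omega>" unfolding wt_def by simp
  qed simp
  have "Pow (insert a S) = Pow S \<union> insert a ` Pow S" by (rule Pow_insert)
  then have "(\<Sum>\<omega>\<in>Pow (insert a S). wt p (insert a S) \<omega>)
      = (\<Sum>\<omega>\<in>Pow S. wt p (insert a S) \<omega>) + (\<Sum>\<omega>\<in>insert a ` Pow S. wt p (insert a S) \<omega>)"
    using sum.union_disjoint[OF fin _ disj] fin by simp
  also have "\<dots> = 1" using s1 s2 insert.IH by simp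
  finally show ?case .
qed

lemma perc_prod:
  assumes f1: "finite E1" and f2: "finite E2" and d: "E1 \<inter> E2 = {}"
  shows "perc_prob p (E1 \<union> E2) (\<lambda>\<omega>. A (\<omega> \<inter> E1) \<and> B (\<omega> \<inter> E2))
         = perc_prob p E1 A * perc_prob p E2 B"
proof -
  let ?h1 = "\<lambda>\<omega>. if A \<omega> then wt p E1 \<omega> else 0"
  let ?h2 = "\<lambda>\<omega>. if B \<omega> then wt p E2 \<omega> else 0"
  let ?h = "\<lambda>\<omega>. if A (\<omega> \<inter> E1) \<and> B (\<omega> \<inter> E2) then wt p (E1 \<union> E2) \<omega> else 0"
  let ?u = "\<lambda>(a, b). a \<union> (b::vtx set set)"
  have inj: "inj_on ?u (Pow E1 \<times> Pow E2)"
  proof (rule inj_onI, clarsimp)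
    fix a b a' b' assume h: "a \<subseteq> E1" "b \<subseteq> E2" "a' \<subseteq> E1" "b' \<subseteq> E2" "a \<union> b = a' \<union> b'"
    then have "a = (a \<union> b) \<inter> E1" "a' = (a' \<union> b') \<inter> E1" "b = (a \<union> b) \<inter> E2" "b' = (a' \<union> b') \<inter> E2"
      using d by auto
    then show "a = a' \<and> b = b'" using h(5) by metis
  qed
  have img: "?u ` (Pow E1 \<times> Pow E2) = Pow (E1 \<union> E2)"
  proof
    show "?u ` (Pow E1 \<times> Pow E2) \<subseteq> Pow (E1 \<union> E2)" by auto
    show "Pow (E1 \<union> E2) \<subseteq> ?u ` (Pow E1 \<times> Pow E2)"
    proof
      fix \<omega> assume "\<omega> \<in> Pow (E1 \<union> E2)"
      then have "\<omega> = ?u (\<omega> \<inter> E1, \<omega> \<inter> E2)" "(\<omega> \<inter> E1, \<omega> \<inter> E2) \<in> Pow E1 \<times> Pow E2" by auto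
      then show "\<omega> \<in> ?u ` (Pow E1 \<times> Pow E2)" by (metis image_eqI)
    qed
  qed
  have "perc_prob p (E1 \<union> E2) (\<lambda>\<omega>. A (\<omega> \<inter> E1) \<and> B (\<omega> \<inter> E2)) = (\<Sum>\<omega>\<in>Pow (E1 \<union> E2). ?h \<omega>)"
    using f1 f2 by (simp add: perc_prob_ind)
  also have "\<dots> = (\<Sum>x\<in>Pow E1 \<times> Pow E2. ?h (?u x))"
    using sum.reindex[OF inj, of ?h] img by simp
  also have "\<dots> = (\<Sum>x\<in>Pow E1 \<times> Pow E2. ?h1 (fst x) * ?h2 (snd x))"
  proof (rule sum.cong, simp)
    fix x assume "x \<in> Pow E1 \<times> Pow E2"
    then obtain a b where x: "x = (a, b)" and h: "a \<subseteq> E1" "b \<subseteq> E2" by auto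
    have i1: "(a \<union> b) \<inter> E1 = a" "(a \<union> b) \<inter> E2 = b" using h d by auto
    have fa: "finite a" "finite b" using h f1 f2 finite_subset by auto
    have ab: "a \<inter> b = {}" using h d by auto
    have c1: "card (a \<union> b) = card a + card b" using card_Un_disjoint[OF fa ab] .
    have e: "E1 \<union> E2 - (a \<union> b) = (E1 - a) \<union> (E2 - b)" using h d by auto
    have c2: "card (E1 \<union> E2 - (a \<union> b)) = card (E1 - a) + card (E2 - b)"
      unfolding e using f1 f2 d by (intro card_Un_disjoint) auto
    have "wt p (E1 \<union> E2) (a \<union> b) = wt p E1 a * wt p E2 b"
      unfolding wt_def c1 c2 by (simp add: power_add)
    then show "?h (?u x) = ?h1 (fst x) * ?h2 (snd x)"
      unfolding x using i1 by simp
  qed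
  also have "\<dots> = (\<Sum>a\<in>Pow E1. ?h1 a) * (\<Sum>b\<in>Pow E2. ?h2 b)"
    by (simp add: sum_product sum.cartesian_product case_prod_beta)
  also have "\<dots> = perc_prob p E1 A * perc_prob p E2 B" using f1 f2 by (simp add: perc_prob_ind)
  finally show ?thesis .
qed

lemma perc_true: "finite E \<Longrightarrow> perc_prob p E (\<lambda>_. True) = 1"
  by (simp add: perc_prob_ind sum_wt_one)

lemma perc_local:
  assumes "finite F" "E \<subseteq> F"
  shows "perc_prob p F (\<lambda>\<omega>. G (\<omega> \<inter> E)) = perc_prob p E G"
proof -
  have fE: "finite E" using assms finite_subset by blast
  have F: "F = E \<union> (F - E)" using assms by auto
  have "perc_prob p F (\<lambda>\<omega>. G (\<omega> \<inter> E)) = perc_prob p (E \<union> (F - E)) (\<lambda>\<omega>. G (\<omega> \<inter> E) \<and> (\<lambda>_. True) (\<omega> \<inter> (F - E)))"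
    using F by simp
  also have "\<dots> = perc_prob p E G * perc_prob p (F - E) (\<lambda>_. True)"
    by (rule perc_prod) (use fE assms in auto)
  also have "\<dots> = perc_prob p E G" using perc_true assms by simp
  finally show ?thesis .
qed

lemma perc_mono:
  assumes "finite E" "0 \<le> p" "p \<le> 1" "\<And>\<omega>. \<omega> \<subseteq> E \<Longrightarrow> A \<omega> \<Longrightarrow> B \<omega>"
  shows "perc_prob p E A \<le> perc_prob p E B"
  unfolding perc_prob_ind[OF assms(1)]
  by (rule sum_mono) (use assms wt_nonneg in auto)

lemma perc_nonneg: "0 \<le> p \<Longrightarrow> p \<le> 1 \<Longrightarrow> 0 \<le> perc_prob p E A"
  unfolding perc_prob_def wt_def[symmetric] by (rule sum_nonneg) (simp add: wt_nonneg)

lemma perc_le1: "0 \<le> p \<Longrightarrow> p \<le> 1 \<Longrightarrow> finite E \<Longrightarrow> perc_prob p E A \<le> 1"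
  using perc_mono[of E p A "\<lambda>_. True"] perc_true by simp

lemma perc_or:
  assumes "finite E" "0 \<le> p" "p \<le> 1"
  shows "perc_prob p E (\<lambda>\<omega>. A \<omega> \<or> B \<omega>) \<le> perc_prob p E A + perc_prob p E B"
  unfolding perc_prob_ind[OF assms(1)] sum.distrib[symmetric]
  by (rule sum_mono) (use assms wt_nonneg in auto)

lemma perc_ex:
  assumes "0 \<le> p" "p \<le> 1" "finite I" "finite E"
  shows "perc_prob p E (\<lambda>\<omega>. \<exists>i\<in>I. A i \<omega>) \<le> (\<Sum>i\<in>I. perc_prob p E (A i))"
  using assms(3)
proof (induction I rule: finite_induct)
  case empty
  then show ?case by (simp add: perc_prob_def)
next
  case (insert a I)
  have "perc_prob p E (\<lambda>\<omega>. \<exists>i\<in>insert a I. A i \<omega>) = perc_prob p E (\<lambda>\<omega>. A a \<omega> \<or> (\<exists>i\<in>I. A i \<omega>))"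
    by simp
  also have "\<dots> \<le> perc_prob p E (A a) + perc_prob p E (\<lambda>\<omega>. \<exists>i\<in>I. A i \<omega>)" by (rule perc_or[OF assms(4,1,2)])
  also have "\<dots> \<le> perc_prob p E (A a) + (\<Sum>i\<in>I. perc_prob p E (A i))" using insert.IH by simp
  finally show ?case using insert by simp
qed

definition imE :: "(vtx \<Rightarrow> vtx) \<Rightarrow> vtx set set \<Rightarrow> vtx set set" where
  "imE \<psi> S = (\<lambda>e. \<psi> ` e) ` S"

lemma perc_sym:
  assumes "inj \<psi>" "finite E"
  shows "perc_prob p (imE \<psi> E) G = perc_prob p E (\<lambda>\<omega>. G (imE \<psi> \<omega>))"
proof -
  have i1: "inj (\<lambda>e. \<psi> ` e)" by (rule injI) (simp add: inj_image_eq_iff[OF assms(1)])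
  have i2: "inj (imE \<psi>)" unfolding imE_def by (rule injI) (simp add: inj_image_eq_iff[OF i1])
  have set: "{\<omega>. \<omega> \<subseteq> imE \<psi> E \<and> G \<omega>} = imE \<psi> ` {\<omega>. \<omega> \<subseteq> E \<and> G (imE \<psi> \<omega>)}"
  proof
    show "{\<omega>. \<omega> \<subseteq> imE \<psi> E \<and> G \<omega>} \<subseteq> imE \<psi> ` {\<omega>. \<omega> \<subseteq> E \<and> G (imE \<psi> \<omega>)}"
    proof
      fix \<omega> assume h: "\<omega> \<in> {\<omega>. \<omega> \<subseteq> imE \<psi> E \<and> G \<omega>}"
      define \<omega>' where "\<omega>' = {e\<in>E. \<psi> ` e \<in> \<omega>}"
      have "imE \<psi> \<omega>' = \<omega>" using h unfolding \<omega>'_def imE_def by auto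
      then show "\<omega> \<in> imE \<psi> ` {\<omega>. \<omega> \<subseteq> E \<and> G (imE \<psi> \<omega>)}" using h unfolding \<omega>'_def by auto
    qed
    show "imE \<psi> ` {\<omega>. \<omega> \<subseteq> E \<and> G (imE \<psi> \<omega>)} \<subseteq> {\<omega>. \<omega> \<subseteq> imE \<psi> E \<and> G \<omega>}"
      unfolding imE_def by auto
  qed
  have c: "card (imE \<psi> S) = card S" for S
    unfolding imE_def by (rule card_image) (use i1 inj_on_subset in blast)
  have d: "imE \<psi> E - imE \<psi> \<omega> = imE \<psi> (E - \<omega>)" for \<omega>
    unfolding imE_def by (rule image_set_diff[OF i1, symmetric])
  show ?thesis unfolding perc_prob_def set
    by (subst sum.reindex) (use i2 inj_on_subset in \<open>auto simp: c d\<close>)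
qed


lemma adj_sym: "adj k u v = adj k v u"
  unfolding adj_def by (auto split: prod.splits simp: abs_minus_commute add.commute add.left_commute)

lemma adj_neq: "adj k u v \<Longrightarrow> u \<noteq> v"
  unfolding adj_def by (auto split: prod.splits)

lemma adj_coord:
  assumes "adj k u v"
  shows "\<bar>fst u - fst v\<bar> \<le> 1" "\<bar>fst (snd u) - fst (snd v)\<bar> \<le> 1"
  using assms unfolding adj_def by (auto split: prod.splits)

lemma slab_edges_iff:
  "{u, v} \<in> slab_edges k U \<longleftrightarrow> u \<in> U \<and> v \<in> U \<and> adj k u v"
proof
  assume "{u, v} \<in> slab_edges k U"
  then obtain u' v' where h: "{u, v} = {u', v'}" "u' \<in> U" "v' \<in> U" "adj k u' v'"
    unfolding slab_edges_def by auto
  then have "(u = u' \<and> v = v') \<or> (u = v' \<and> v = u')" by (metis doubleton_eq_iff)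
  then show "u \<in> U \<and> v \<in> U \<and> adj k u v" using h adj_sym by metis
next
  assume "u \<in> U \<and> v \<in> U \<and> adj k u v"
  then show "{u, v} \<in> slab_edges k U" unfolding slab_edges_def by blast
qed

lemma bar_iff: "(x, y, z) \<in> bar k T \<longleftrightarrow> (x, y) \<in> T \<and> 0 \<le> z \<and> z \<le> int k"
  unfolding bar_def by auto

lemma bar_mono: "T \<subseteq> T' \<Longrightarrow> bar k T \<subseteq> bar k T'"
  unfolding bar_def by auto

lemma finite_bar: "finite T \<Longrightarrow> finite (bar k T)"
proof -
  assume "finite T"
  have "bar k T \<subseteq> (\<lambda>((x, y), z). (x, y, z)) ` (T \<times> {0..int k})"
    unfolding bar_def by force
  then show ?thesis using \<open>finite T\<close> finite_subset by blast
qed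

lemma finite_slab_edges: "finite U \<Longrightarrow> finite (slab_edges k U)"
proof -
  assume "finite U"
  have "slab_edges k U \<subseteq> (\<lambda>(u, v). {u, v}) ` (U \<times> U)"
    unfolding slab_edges_def by auto
  then show ?thesis using \<open>finite U\<close> finite_subset by blast
qed

lemma slab_edges_mono: "U \<subseteq> U' \<Longrightarrow> slab_edges k U \<subseteq> slab_edges k U'"
  unfolding slab_edges_def by blast

lemma slab_edges_disj:
  assumes "U \<inter> U' = {}" shows "slab_edges k U \<inter> slab_edges k U' = {}"
proof (rule equals0I)
  fix e assume "e \<in> slab_edges k U \<inter> slab_edges k U'"
  then obtain u v u' v' where h: "e = {u, v}" "u \<in> U" "v \<in> U" "e = {u', v'}" "u' \<in> U'"
    unfolding slab_edges_def by blast
  have "u' \<in> e" using h(4) by simp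
  then have "u' \<in> {u, v}" using h(1) by simp
  then show False using h assms by auto
qed

lemma open_pathD: "open_path \<omega> xs \<Longrightarrow> Suc i < length xs \<Longrightarrow> {xs ! i, xs ! Suc i} \<in> \<omega>"
  unfolding open_path_def by blast

definition seg :: "vtx list \<Rightarrow> nat \<Rightarrow> nat \<Rightarrow> vtx list" where
  "seg xs i j = map (\<lambda>l. xs ! (i + l)) [0..<Suc (j - i)]"

lemma seg_props:
  assumes "open_path \<omega> xs" "i \<le> j" "j < length xs"
  shows "open_path \<omega> (seg xs i j)" "hd (seg xs i j) = xs ! i" "last (seg xs i j) = xs ! j"
    "set (seg xs i j) = {xs ! l | l. i \<le> l \<and> l \<le> j}"
proof -
  show "open_path \<omega> (seg xs i j)"
    unfolding open_path_def seg_def using assms open_pathD[OF assms(1)]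
    by (auto simp del: upt_Suc)
  show "hd (seg xs i j) = xs ! i" unfolding seg_def by (simp add: hd_map del: upt_Suc)
  show "last (seg xs i j) = xs ! j" unfolding seg_def using assms by (simp add: last_map del: upt_Suc)
  show "set (seg xs i j) = {xs ! l | l. i \<le> l \<and> l \<le> j}"
  proof
    show "set (seg xs i j) \<subseteq> {xs ! l | l. i \<le> l \<and> l \<le> j}"
    proof
      fix x assume "x \<in> set (seg xs i j)"
      then obtain l where "l < Suc (j - i)" "x = xs ! (i + l)" unfolding seg_def by (auto simp del: upt_Suc)
      then show "x \<in> {xs ! l | l. i \<le> l \<and> l \<le> j}" using assms(2) by force
    qed
    show "{xs ! l | l. i \<le> l \<and> l \<le> j} \<subseteq> set (seg xs i j)"
    proof
      fix x assume "x \<in> {xs ! l | l. i \<le> l \<and> l \<le> j}"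
      then obtain l where l: "i \<le> l" "l \<le> j" "x = xs ! l" by blast
      then have "x = xs ! (i + (l - i))" "l - i \<in> set [0..<Suc (j - i)]" by auto
      then show "x \<in> set (seg xs i j)" unfolding seg_def by (simp del: upt_Suc)
    qed
  qed
qed

lemma open_path_rev: "open_path \<omega> xs \<Longrightarrow> open_path \<omega> (rev xs)"
  unfolding open_path_def
proof (intro conjI allI impI)
  fix i assume h: "xs \<noteq> [] \<and> (\<forall>i. Suc i < length xs \<longrightarrow> {xs ! i, xs ! Suc i} \<in> \<omega>)" "Suc i < length (rev xs)"
  then have "{xs ! (length xs - Suc (Suc i)), xs ! Suc (length xs - Suc (Suc i))} \<in> \<omega>" by auto
  moreover have "Suc (length xs - Suc (Suc i)) = length xs - Suc i" using h by auto
  ultimately show "{rev xs ! i, rev xs ! Suc i} \<in> \<omega>" using h by (simp add: rev_nth insert_commute)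
qed auto

lemma connects_sym: "connects \<omega> A B \<Longrightarrow> connects \<omega> B A"
  unfolding connects_def using open_path_rev hd_rev last_rev by metis

lemma connects_mono: "connects \<omega> A B \<Longrightarrow> \<omega> \<subseteq> \<omega>' \<Longrightarrow> A \<subseteq> A' \<Longrightarrow> B \<subseteq> B' \<Longrightarrow> connects \<omega>' A' B'"
  unfolding connects_def open_path_def by blast

lemma open_path_map:
  assumes "open_path \<omega> xs"
  shows "open_path (imE \<psi> \<omega>) (map \<psi> xs)"
  unfolding open_path_def
proof (intro conjI allI impI)
  show "map \<psi> xs \<noteq> []" using assms open_path_def by auto
  fix i assume i: "Suc i < length (map \<psi> xs)"
  then have "{xs ! i, xs ! Suc i} \<in> \<omega>" using open_pathD[OF assms] by simp
  moreover have "{map \<psi> xs ! i, map \<psi> xs ! Suc i} = \<psi> ` {xs ! i, xs ! Suc i}" using i by simp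
  ultimately show "{map \<psi> xs ! i, map \<psi> xs ! Suc i} \<in> imE \<psi> \<omega>" unfolding imE_def by blast
qed

lemma connects_map: "connects \<omega> A B \<Longrightarrow> connects (imE \<psi> \<omega>) (\<psi> ` A) (\<psi> ` B)"
  unfolding connects_def
proof (elim exE conjE)
  fix xs assume h: "open_path \<omega> xs" "hd xs \<in> A" "last xs \<in> B"
  then have ne: "xs \<noteq> []" unfolding open_path_def by blast
  show "\<exists>ys. open_path (imE \<psi> \<omega>) ys \<and> hd ys \<in> \<psi> ` A \<and> last ys \<in> \<psi> ` B"
  proof (rule exI[of _ "map \<psi> xs"], intro conjI)
    show "open_path (imE \<psi> \<omega>) (map \<psi> xs)" by (rule open_path_map[OF h(1)])
    show "hd (map \<psi> xs) \<in> \<psi> ` A" using h(2) ne by (simp add: hd_map)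
    show "last (map \<psi> xs) \<in> \<psi> ` B" using h(3) ne by (simp add: last_map)
  qed
qed

lemma imE_inv: "bij \<psi> \<Longrightarrow> imE (inv \<psi>) (imE \<psi> \<omega>) = \<omega>"
  unfolding imE_def by (simp add: image_image bij_is_inj)

lemma connects_bij:
  assumes "bij \<psi>"
  shows "connects (imE \<psi> \<omega>) (\<psi> ` A) (\<psi> ` B) = connects \<omega> A B"
proof
  assume "connects (imE \<psi> \<omega>) (\<psi> ` A) (\<psi> ` B)"
  then have "connects (imE (inv \<psi>) (imE \<psi> \<omega>)) (inv \<psi> ` \<psi> ` A) (inv \<psi> ` \<psi> ` B)"
    by (rule connects_map)
  moreover have "inv \<psi> ` \<psi> ` A = A" "inv \<psi> ` \<psi> ` B = B"
    using assms by (simp_all add: image_inv_f_f bij_is_inj)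
  ultimately show "connects \<omega> A B" using imE_inv[OF assms] by simp
qed (rule connects_map)

lemma slab_edges_bij:
  assumes "bij \<psi>" "\<And>u v. adj k (\<psi> u) (\<psi> v) = adj k u v"
  shows "slab_edges k (\<psi> ` U) = imE \<psi> (slab_edges k U)"
proof
  show "slab_edges k (\<psi> ` U) \<subseteq> imE \<psi> (slab_edges k U)"
  proof
    fix e assume "e \<in> slab_edges k (\<psi> ` U)"
    then obtain u v where "e = {\<psi> u, \<psi> v}" "u \<in> U" "v \<in> U" "adj k (\<psi> u) (\<psi> v)"
      unfolding slab_edges_def by blast
    then have "e = \<psi> ` {u, v}" "{u, v} \<in> slab_edges k U" using assms(2) slab_edges_iff by auto
    then show "e \<in> imE \<psi> (slab_edges k U)" unfolding imE_def by blast
  qed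
  show "imE \<psi> (slab_edges k U) \<subseteq> slab_edges k (\<psi> ` U)"
  proof
    fix e assume "e \<in> imE \<psi> (slab_edges k U)"
    then obtain u v where "e = \<psi> ` {u, v}" "u \<in> U" "v \<in> U" "adj k u v"
      unfolding slab_edges_def imE_def by blast
    then show "e \<in> slab_edges k (\<psi> ` U)" using assms(2) slab_edges_iff[of "\<psi> u" "\<psi> v"] by auto
  qed
qed

lemma path_in:
  assumes "open_path (\<omega> \<inter> slab_edges k U) xs" "hd xs \<in> U"
  shows "\<forall>v\<in>set xs. v \<in> U"
proof
  fix v assume "v \<in> set xs"
  then obtain i where i: "i < length xs" "xs ! i = v" by (metis in_set_conv_nth)
  show "v \<in> U"
  proof (cases i)
    case 0
    then show ?thesis using i assms by (metis hd_conv_nth open_path_def)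
  next
    case (Suc j)
    then have "{xs ! j, xs ! Suc j} \<in> slab_edges k U" using i assms(1) open_pathD by blast
    then show ?thesis using slab_edges_iff Suc i by blast
  qed
qed

lemma path_adj:
  assumes "open_path \<omega> xs" "\<omega> \<subseteq> slab_edges k U" "Suc i < length xs"
  shows "adj k (xs ! i) (xs ! Suc i)"
  using open_pathD[OF assms(1,3)] assms(2) slab_edges_iff by blast

lemma path_restrict:
  assumes "open_path \<omega> xs" "\<omega> \<subseteq> slab_edges k U'" "set xs \<subseteq> U"
  shows "open_path (\<omega> \<inter> slab_edges k U) xs"
  unfolding open_path_def
proof (intro conjI allI impI)
  show "xs \<noteq> []" using assms(1) open_path_def by blast
  fix i assume i: "Suc i < length xs"
  have a1: "{xs ! i, xs ! Suc i} \<in> \<omega>" using open_pathD[OF assms(1) i] .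
  have a2: "adj k (xs ! i) (xs ! Suc i)" using path_adj[OF assms(1,2) i] .
  have a3: "xs ! i \<in> U" using assms(3) i nth_mem[of i xs] by auto
  have a4: "xs ! Suc i \<in> U" using assms(3) i nth_mem[of "Suc i" xs] by auto
  show "{xs ! i, xs ! Suc i} \<in> \<omega> \<inter> slab_edges k U"
    using a1 a2 a3 a4 by (simp add: slab_edges_iff)
qed


definition EE :: "nat \<Rightarrow> (int \<times> int) set \<Rightarrow> vtx set set" where
  "EE k T = slab_edges k (bar k T)"

definition ev :: "nat \<Rightarrow> (int \<times> int) set \<Rightarrow> (int \<times> int) set \<Rightarrow> (int \<times> int) set \<Rightarrow> vtx set set \<Rightarrow> bool" where
  "ev k T A B \<omega> = connects (\<omega> \<inter> EE k T) (bar k A) (bar k B)"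

definition Q :: "nat \<Rightarrow> real \<Rightarrow> (int \<times> int) set \<Rightarrow> (int \<times> int) set \<Rightarrow> (int \<times> int) set \<Rightarrow> real" where
  "Q k p T A B = perc_prob p (EE k T) (\<lambda>\<omega>. connects \<omega> (bar k A) (bar k B))"

lemma finite_EE: "finite T \<Longrightarrow> finite (EE k T)"
  unfolding EE_def by (intro finite_slab_edges finite_bar)

lemma EE_mono: "T \<subseteq> T' \<Longrightarrow> EE k T \<subseteq> EE k T'"
  unfolding EE_def by (intro slab_edges_mono bar_mono)

lemma ev_local:
  assumes "finite F" "EE k T \<subseteq> F"
  shows "perc_prob p F (ev k T A B) = Q k p T A B"
  unfolding ev_def Q_def by (rule perc_local[OF assms])

lemma ev_sub: "T \<subseteq> T' \<Longrightarrow> ev k T A B (\<omega> \<inter> EE k T') = ev k T A B \<omega>"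
proof -
  assume "T \<subseteq> T'"
  then have "\<omega> \<inter> EE k T' \<inter> EE k T = \<omega> \<inter> EE k T" using EE_mono by blast
  then show ?thesis unfolding ev_def by simp
qed

lemma Q_mono:
  assumes "finite T'" "T \<subseteq> T'" "A \<subseteq> A'" "B \<subseteq> B'" "0 \<le> p" "p \<le> 1"
  shows "Q k p T A B \<le> Q k p T' A' B'"
proof -
  have f: "finite (EE k T')" using assms finite_EE by blast
  have "Q k p T A B = perc_prob p (EE k T') (ev k T A B)"
    using ev_local[OF f EE_mono[OF assms(2)]] by simp
  also have "\<dots> \<le> perc_prob p (EE k T') (ev k T' A' B')"
  proof (rule perc_mono[OF f assms(5,6)])
    fix \<omega> assume "ev k T A B \<omega>"
    then show "ev k T' A' B' \<omega>" unfolding ev_def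
      by (rule connects_mono) (use EE_mono[OF assms(2)] bar_mono assms(3,4) in auto)
  qed
  also have "\<dots> = Q k p T' A' B'" using ev_local[OF f] by simp
  finally show ?thesis .
qed

definition lift :: "(int \<times> int \<Rightarrow> int \<times> int) \<Rightarrow> vtx \<Rightarrow> vtx" where
  "lift \<phi> v = (fst (\<phi> (fst v, fst (snd v))), snd (\<phi> (fst v, fst (snd v))), snd (snd v))"

lemma lift_bar: "lift \<phi> ` bar k T = bar k (\<phi> ` T)"
proof
  show "lift \<phi> ` bar k T \<subseteq> bar k (\<phi> ` T)" unfolding lift_def bar_def by force
  show "bar k (\<phi> ` T) \<subseteq> lift \<phi> ` bar k T"
  proof
    fix v assume "v \<in> bar k (\<phi> ` T)"
    obtain x y z where v0: "v = (x, y, z)" by (cases v)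
    then have h: "(x, y) \<in> \<phi> ` T" "0 \<le> z" "z \<le> int k" using \<open>v \<in> bar k (\<phi> ` T)\<close> bar_iff by auto
    then obtain t where t: "t \<in> T" "(x, y) = \<phi> t" by blast
    then have "v = lift \<phi> (fst t, snd t, z)" "(fst t, snd t, z) \<in> bar k T"
      unfolding lift_def using v0 h bar_iff t(2)[symmetric] by auto
    then show "v \<in> lift \<phi> ` bar k T" by blast
  qed
qed

lemma lift_bij:
  assumes "bij \<phi>" shows "bij (lift \<phi>)"
proof -
  have "lift (inv \<phi>) (lift \<phi> v) = v" for v
    unfolding lift_def using assms by (simp add: bij_is_inj)
  moreover have "lift \<phi> (lift (inv \<phi>) v) = v" for v
    unfolding lift_def using assms by (simp add: bij_is_surj surj_f_inv_f)
  ultimately show ?thesis by (metis bij_betw_byWitness subset_UNIV surj_def)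
qed

lemma lift_adj:
  assumes "\<And>x1 y1 x2 y2. \<bar>fst (\<phi> (x1, y1)) - fst (\<phi> (x2, y2))\<bar> + \<bar>snd (\<phi> (x1, y1)) - snd (\<phi> (x2, y2))\<bar>
      = \<bar>x1 - x2\<bar> + \<bar>y1 - y2\<bar>"
  shows "adj k (lift \<phi> u) (lift \<phi> v) = adj k u v"
  using assms[of "fst u" "fst (snd u)" "fst v" "fst (snd v)"]
  unfolding adj_def lift_def in_slab_def by (auto split: prod.splits)

lemma Q_sym:
  assumes "bij \<phi>" "finite T"
    "\<And>x1 y1 x2 y2. \<bar>fst (\<phi> (x1, y1)) - fst (\<phi> (x2, y2))\<bar> + \<bar>snd (\<phi> (x1, y1)) - snd (\<phi> (x2, y2))\<bar>
      = \<bar>x1 - x2\<bar> + \<bar>y1 - y2\<bar>"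
  shows "Q k p (\<phi> ` T) (\<phi> ` A) (\<phi> ` B) = Q k p T A B"
proof -
  have b: "bij (lift \<phi>)" using lift_bij[OF assms(1)] .
  have e: "EE k (\<phi> ` T) = imE (lift \<phi>) (EE k T)"
    unfolding EE_def lift_bar[symmetric] by (rule slab_edges_bij[OF b lift_adj[OF assms(3)]])
  have "Q k p (\<phi> ` T) (\<phi> ` A) (\<phi> ` B)
      = perc_prob p (imE (lift \<phi>) (EE k T)) (\<lambda>\<omega>. connects \<omega> (lift \<phi> ` bar k A) (lift \<phi> ` bar k B))"
    unfolding Q_def e lift_bar ..
  also have "\<dots> = perc_prob p (EE k T) (\<lambda>\<omega>. connects (imE (lift \<phi>) \<omega>) (lift \<phi> ` bar k A) (lift \<phi> ` bar k B))"
    by (rule perc_sym) (use b bij_is_inj finite_EE assms(2) in auto)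
  also have "\<dots> = Q k p T A B" unfolding Q_def connects_bij[OF b] ..
  finally show ?thesis .
qed

definition tr :: "int \<Rightarrow> int \<Rightarrow> int \<times> int \<Rightarrow> int \<times> int" where
  "tr a b = (\<lambda>(x, y). (x + a, y + b))"

lemma tr_bij: "bij (tr a b)"
proof -
  have "tr (-a) (-b) (tr a b v) = v" "tr a b (tr (-a) (-b) v) = v" for v
    unfolding tr_def by (auto split: prod.splits)
  then show ?thesis by (metis bij_betw_byWitness subset_UNIV surj_def)
qed

lemma tr_img: "tr a b ` ({c..d} \<times> {e..g}) = {c + a..d + a} \<times> {e + b..g + b}"
proof
  show "tr a b ` ({c..d} \<times> {e..g}) \<subseteq> {c + a..d + a} \<times> {e + b..g + b}" unfolding tr_def by auto
  show "{c + a..d + a} \<times> {e + b..g + b} \<subseteq> tr a b ` ({c..d} \<times> {e..g})"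
  proof
    fix v assume "v \<in> {c + a..d + a} \<times> {e + b..g + b}"
    then obtain x y where "v = (x, y)" "c + a \<le> x" "x \<le> d + a" "e + b \<le> y" "y \<le> g + b" by auto
    then have "v = tr a b (x - a, y - b)" "(x - a, y - b) \<in> {c..d} \<times> {e..g}" unfolding tr_def by auto
    then show "v \<in> tr a b ` ({c..d} \<times> {e..g})" by blast
  qed
qed

lemma Q_tr:
  "Q k p ({c + a..d + a} \<times> {e + b..g + b}) ({c1 + a..d1 + a} \<times> {e1 + b..g1 + b}) ({c2 + a..d2 + a} \<times> {e2 + b..g2 + b})
   = Q k p ({c..d} \<times> {e..g}) ({c1..d1} \<times> {e1..g1}) ({c2..d2} \<times> {e2..g2})"
  using Q_sym[OF tr_bij, of "{c..d} \<times> {e..g}" a b k p "{c1..d1} \<times> {e1..g1}" "{c2..d2} \<times> {e2..g2}"]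
  unfolding tr_img by (simp add: tr_def)

lemma Q_swap:
  "Q k p (B1 \<times> A1) (B2 \<times> A2) (B3 \<times> A3) = Q k p (A1 \<times> B1) (A2 \<times> B2) (A3 \<times> B3)"
  if "finite A1" "finite B1"
  using Q_sym[of prod.swap "A1 \<times> B1" k p "A2 \<times> B2" "A3 \<times> B3"] that
  unfolding product_swap by (simp add: add.commute)


lemma ivt_basic:
  fixes h :: "nat \<Rightarrow> int"
  assumes "h 0 \<le> s" "s \<le> t" "t \<le> h n" "\<And>i. i < n \<Longrightarrow> \<bar>h (Suc i) - h i\<bar> \<le> 1"
  shows "\<exists>i j. i \<le> j \<and> j \<le> n \<and> h i = s \<and> h j = t \<and> (\<forall>l. i \<le> l \<and> l \<le> j \<longrightarrow> s \<le> h l \<and> h l \<le> t)"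
proof -
  define j where "j = (LEAST j. t \<le> h j)"
  have tj: "t \<le> h j" unfolding j_def by (rule LeastI[of _ n]) (rule assms(3))
  have jn: "j \<le> n" unfolding j_def by (rule Least_le) (rule assms(3))
  have below: "h l < t" if "l < j" for l
    using not_less_Least[of l "\<lambda>j. t \<le> h j"] that unfolding j_def by simp
  have hj: "h j = t"
  proof (cases j)
    case 0
    then show ?thesis using tj assms(1,2) by simp
  next
    case (Suc j')
    then have "h j' < t" using below by simp
    moreover have "\<bar>h (Suc j') - h j'\<bar> \<le> 1" using assms(4) jn Suc by simp
    ultimately show ?thesis using tj Suc by simp
  qed
  define S where "S = {i. i \<le> j \<and> h i \<le> s}"
  have finS: "finite S" unfolding S_def by simp
  have S0: "0 \<in> S" unfolding S_def using assms(1) by simp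
  define i where "i = Max S"
  have iS: "i \<in> S" unfolding i_def using finS S0 Max_in by blast
  have ij: "i \<le> j" and his: "h i \<le> s" using iS unfolding S_def by auto
  have above: "s < h l" if "i < l" "l \<le> j" for l
  proof (rule ccontr)
    assume "\<not> s < h l"
    then have "l \<in> S" unfolding S_def using that by simp
    then have "l \<le> i" unfolding i_def using finS by simp
    then show False using that by simp
  qed
  have hi: "h i = s"
  proof (cases "i = j")
    case True
    then show ?thesis using his hj assms(2) by simp
  next
    case False
    then have "s < h (Suc i)" using above ij by simp
    moreover have "\<bar>h (Suc i) - h i\<bar> \<le> 1" using assms(4) ij jn False by simp
    ultimately show ?thesis using his by simp
  qed
  have "\<forall>l. i \<le> l \<and> l \<le> j \<longrightarrow> s \<le> h l \<and> h l \<le> t"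
  proof (intro allI impI)
    fix l assume l: "i \<le> l \<and> l \<le> j"
    have "s \<le> h l" using above[of l] hi l by (cases "l = i") auto
    moreover have "h l \<le> t" using below[of l] hj l by (cases "l = j") auto
    ultimately show "s \<le> h l \<and> h l \<le> t" by simp
  qed
  then show ?thesis using ij jn hi hj by blast
qed

lemma ivt_gen:
  fixes h :: "nat \<Rightarrow> int"
  assumes "p \<le> n" "q \<le> n" "h p \<le> s" "s \<le> t" "t \<le> h q" "\<And>i. i < n \<Longrightarrow> \<bar>h (Suc i) - h i\<bar> \<le> 1"
  shows "\<exists>i j. i \<le> j \<and> j \<le> n \<and> ((h i = s \<and> h j = t) \<or> (h i = t \<and> h j = s)) \<and>
     (\<forall>l. i \<le> l \<and> l \<le> j \<longrightarrow> s \<le> h l \<and> h l \<le> t)"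
proof (cases "p \<le> q")
  case True
  have "\<exists>i j. i \<le> j \<and> j \<le> q - p \<and> h (p + i) = s \<and> h (p + j) = t \<and>
      (\<forall>l. i \<le> l \<and> l \<le> j \<longrightarrow> s \<le> h (p + l) \<and> h (p + l) \<le> t)"
    by (rule ivt_basic[of "\<lambda>l. h (p + l)"]) (use assms True in auto)
  then obtain i j where ij: "i \<le> j" "j \<le> q - p" "h (p + i) = s" "h (p + j) = t"
    "\<forall>l. i \<le> l \<and> l \<le> j \<longrightarrow> s \<le> h (p + l) \<and> h (p + l) \<le> t" by blast
  have "\<forall>l. p + i \<le> l \<and> l \<le> p + j \<longrightarrow> s \<le> h l \<and> h l \<le> t"
  proof (intro allI impI)
    fix l assume a: "p + i \<le> l \<and> l \<le> p + j"
    then have "i \<le> l - p \<and> l - p \<le> j" by arith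
    moreover have "p + (l - p) = l" using a by arith
    ultimately show "s \<le> h l \<and> h l \<le> t" using ij(5)[rule_format, of "l - p"] by simp
  qed
  then show ?thesis using ij assms True by (intro exI[of _ "p + i"] exI[of _ "p + j"]) auto
next
  case False
  have "\<exists>i j. i \<le> j \<and> j \<le> p - q \<and> - h (q + i) = - t \<and> - h (q + j) = - s \<and>
      (\<forall>l. i \<le> l \<and> l \<le> j \<longrightarrow> - t \<le> - h (q + l) \<and> - h (q + l) \<le> - s)"
  proof (rule ivt_basic[of "\<lambda>l. - h (q + l)"])
    fix i assume "i < p - q"
    then have "q + i < n" using assms False by arith
    then have "\<bar>h (Suc (q + i)) - h (q + i)\<bar> \<le> 1" using assms(6) by blast
    then show "\<bar>- h (q + Suc i) - - h (q + i)\<bar> \<le> 1" by (simp add: abs_minus_commute)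
  qed (use assms False in auto)
  then obtain i j where ij: "i \<le> j" "j \<le> p - q" "h (q + i) = t" "h (q + j) = s"
    "\<forall>l. i \<le> l \<and> l \<le> j \<longrightarrow> s \<le> h (q + l) \<and> h (q + l) \<le> t" by auto
  have "\<forall>l. q + i \<le> l \<and> l \<le> q + j \<longrightarrow> s \<le> h l \<and> h l \<le> t"
  proof (intro allI impI)
    fix l assume a: "q + i \<le> l \<and> l \<le> q + j"
    then have "i \<le> l - q \<and> l - q \<le> j" by arith
    moreover have "q + (l - q) = l" using a by arith
    ultimately show "s \<le> h l \<and> h l \<le> t" using ij(5)[rule_format, of "l - q"] by simp
  qed
  then show ?thesis using ij assms False by (intro exI[of _ "q + i"] exI[of _ "q + j"]) auto
qed


definition rect :: "bool \<Rightarrow> int \<Rightarrow> int \<Rightarrow> int \<Rightarrow> int \<Rightarrow> (int \<times> int) set" where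
  "rect d a1 a2 b1 b2 = (if d then {a1..a2} \<times> {b1..b2} else {b1..b2} \<times> {a1..a2})"

definition sd :: "bool \<Rightarrow> int \<Rightarrow> int \<Rightarrow> int \<Rightarrow> (int \<times> int) set" where
  "sd d a b1 b2 = (if d then {a} \<times> {b1..b2} else {b1..b2} \<times> {a})"

definition Cr :: "nat \<Rightarrow> bool \<Rightarrow> int \<Rightarrow> int \<Rightarrow> int \<Rightarrow> int \<Rightarrow> vtx set set \<Rightarrow> bool" where
  "Cr k d a1 a2 b1 b2 = ev k (rect d a1 a2 b1 b2) (sd d a1 b1 b2) (sd d a2 b1 b2)"

definition c1 :: "bool \<Rightarrow> vtx \<Rightarrow> int" where
  "c1 d v = (if d then fst v else fst (snd v))"

definition c2 :: "bool \<Rightarrow> vtx \<Rightarrow> int" where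
  "c2 d v = (if d then fst (snd v) else fst v)"

definition fN :: "nat \<Rightarrow> real \<Rightarrow> int \<Rightarrow> real" where
  "fN k p N = f_cross k p N (2 * N)"

lemma c12_neg: "c1 (\<not> d) v = c2 d v" "c2 (\<not> d) v = c1 d v"
  unfolding c1_def c2_def by auto

lemma mem_rect:
  "v \<in> bar k (rect d a1 a2 b1 b2) \<longleftrightarrow>
    a1 \<le> c1 d v \<and> c1 d v \<le> a2 \<and> b1 \<le> c2 d v \<and> c2 d v \<le> b2 \<and> in_slab k v"
  by (cases v) (auto simp: rect_def c1_def c2_def bar_iff in_slab_def)

lemma mem_sd:
  "v \<in> bar k (sd d a b1 b2) \<longleftrightarrow> c1 d v = a \<and> b1 \<le> c2 d v \<and> c2 d v \<le> b2 \<and> in_slab k v"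
  by (cases v) (auto simp: sd_def c1_def c2_def bar_iff in_slab_def)

lemma adj_c:
  assumes "adj k u v"
  shows "\<bar>c1 d u - c1 d v\<bar> \<le> 1" "\<bar>c2 d u - c2 d v\<bar> \<le> 1" "in_slab k u" "in_slab k v"
  using adj_coord[OF assms] assms unfolding c1_def c2_def adj_def by auto

lemma finite_rect: "finite (rect d a1 a2 b1 b2)"
  unfolding rect_def by simp

lemma rect_mono:
  "a1' \<le> a1 \<Longrightarrow> a2 \<le> a2' \<Longrightarrow> b1' \<le> b1 \<Longrightarrow> b2 \<le> b2' \<Longrightarrow> rect d a1 a2 b1 b2 \<subseteq> rect d a1' a2' b1' b2'"
  unfolding rect_def by auto

lemma fN_Q: "fN k p N = Q k p ({0..N} \<times> {0..2*N}) ({0} \<times> {0..2*N}) ({N} \<times> {0..2*N})"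
  unfolding fN_def f_cross_def Q_def EE_def by simp

lemma cross_bound_T:
  assumes "0 \<le> p" "p \<le> 1" "0 \<le> h" "h \<le> 2 * N"
  shows "Q k p ({a..a+N} \<times> {b..b+h}) ({a} \<times> {b..b+h}) ({a+N} \<times> {b..b+h}) \<le> fN k p N"
proof -
  have "Q k p ({a..a+N} \<times> {b..b+h}) ({a} \<times> {b..b+h}) ({a+N} \<times> {b..b+h})
      = Q k p ({0+a..N+a} \<times> {0+b..h+b}) ({0+a..0+a} \<times> {0+b..h+b}) ({N+a..N+a} \<times> {0+b..h+b})"
    by (simp add: add.commute)
  also have "\<dots> = Q k p ({0..N} \<times> {0..h}) ({0..0} \<times> {0..h}) ({N..N} \<times> {0..h})"
    by (rule Q_tr)
  also have "\<dots> \<le> Q k p ({0..N} \<times> {0..2*N}) ({0} \<times> {0..2*N}) ({N} \<times> {0..2*N})"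
    by (rule Q_mono) (use assms in auto)
  finally show ?thesis using fN_Q by simp
qed

lemma cross_bound:
  assumes "0 \<le> p" "p \<le> 1" "0 \<le> h" "h \<le> 2 * N"
  shows "Q k p (rect d a (a+N) b (b+h)) (sd d a b (b+h)) (sd d (a+N) b (b+h)) \<le> fN k p N"
proof (cases d)
  case True
  then show ?thesis using cross_bound_T[OF assms] unfolding rect_def sd_def by simp
next
  case False
  have "Q k p (rect d a (a+N) b (b+h)) (sd d a b (b+h)) (sd d (a+N) b (b+h))
     = Q k p ({b..b+h} \<times> {a..a+N}) ({b..b+h} \<times> {a}) ({b..b+h} \<times> {a+N})"
    unfolding rect_def sd_def using False by simp
  also have "\<dots> = Q k p ({a..a+N} \<times> {b..b+h}) ({a} \<times> {b..b+h}) ({a+N} \<times> {b..b+h})"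
    by (rule Q_swap) auto
  finally show ?thesis using cross_bound_T[OF assms] by simp
qed

lemma Cr_prob:
  assumes "0 \<le> p" "p \<le> 1" "0 \<le> h" "h \<le> 2 * N" "finite F" "EE k (rect d a (a+N) b (b+h)) \<subseteq> F"
  shows "perc_prob p F (Cr k d a (a+N) b (b+h)) \<le> fN k p N"
  unfolding Cr_def ev_local[OF assms(5,6)] using cross_bound[OF assms(1-4)] .

lemma subpath:
  fixes g :: "vtx \<Rightarrow> int" and s t :: int
  assumes op: "open_path (\<omega> \<inter> slab_edges k U0) P"
    and gadj: "\<And>u v. adj k u v \<Longrightarrow> \<bar>g u - g v\<bar> \<le> 1"
    and pq: "p < length P" "q < length P" "g (P ! p) \<le> s" "s \<le> t" "t \<le> g (P ! q)"
  shows "\<exists>zs. open_path (\<omega> \<inter> slab_edges k U0) zs \<and> set zs \<subseteq> set P \<and>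
     ((g (hd zs) = s \<and> g (last zs) = t) \<or> (g (hd zs) = t \<and> g (last zs) = s)) \<and>
     (\<forall>v\<in>set zs. s \<le> g v \<and> g v \<le> t)"
proof -
  define n where "n = length P - 1"
  have steps: "\<bar>g (P ! Suc i) - g (P ! i)\<bar> \<le> 1" if "i < n" for i
  proof -
    have "adj k (P ! i) (P ! Suc i)"
      by (rule path_adj[OF op Int_lower2]) (use that n_def in auto)
    then have "\<bar>g (P ! i) - g (P ! Suc i)\<bar> \<le> 1" by (rule gadj)
    then show ?thesis by (auto simp: abs_le_iff)
  qed
  obtain i j where ij: "i \<le> j" "j \<le> n" "((g (P ! i) = s \<and> g (P ! j) = t) \<or> (g (P ! i) = t \<and> g (P ! j) = s))"
    "\<forall>l. i \<le> l \<and> l \<le> j \<longrightarrow> s \<le> g (P ! l) \<and> g (P ! l) \<le> t"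
  proof -
    have "p \<le> n" "q \<le> n" using pq n_def by auto
    from ivt_gen[of p n q "\<lambda>l. g (P ! l)" s t, OF this pq(3,4,5) steps] show ?thesis
      using that by blast
  qed
  have jl: "j < length P" using ij(2) pq n_def by auto
  note sp = seg_props[OF op ij(1) jl]
  show ?thesis
  proof (rule exI[of _ "seg P i j"], intro conjI)
    show "open_path (\<omega> \<inter> slab_edges k U0) (seg P i j)" using sp(1) .
    show "set (seg P i j) \<subseteq> set P" unfolding sp(4) using jl by auto
    show "(g (hd (seg P i j)) = s \<and> g (last (seg P i j)) = t) \<or> (g (hd (seg P i j)) = t \<and> g (last (seg P i j)) = s)"
      unfolding sp(2,3) using ij(3) .
    show "\<forall>v\<in>set (seg P i j). s \<le> g v \<and> g v \<le> t" unfolding sp(4) using ij(4) by auto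
  qed
qed

lemma cr_from_path:
  assumes op: "open_path (\<omega> \<inter> slab_edges k U0) zs"
    and inside: "\<forall>v\<in>set zs. in_slab k v \<and> a1 \<le> c1 d v \<and> c1 d v \<le> a2 \<and> b1 \<le> c2 d v \<and> c2 d v \<le> b2"
    and ends: "(c1 d (hd zs) = a1 \<and> c1 d (last zs) = a2) \<or> (c1 d (hd zs) = a2 \<and> c1 d (last zs) = a1)"
  shows "Cr k d a1 a2 b1 b2 \<omega>"
proof -
  have ne: "zs \<noteq> []" using op open_path_def by blast
  have sub: "set zs \<subseteq> bar k (rect d a1 a2 b1 b2)" using inside mem_rect by blast
  have "open_path ((\<omega> \<inter> slab_edges k U0) \<inter> slab_edges k (bar k (rect d a1 a2 b1 b2))) zs"
    by (rule path_restrict[OF op _ sub]) auto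
  then have op2: "open_path (\<omega> \<inter> EE k (rect d a1 a2 b1 b2)) zs"
    unfolding EE_def open_path_def by blast
  have hl: "hd zs \<in> set zs" "last zs \<in> set zs" using ne by auto
  show ?thesis
    using ends
  proof
    assume e: "c1 d (hd zs) = a1 \<and> c1 d (last zs) = a2"
    then have "hd zs \<in> bar k (sd d a1 b1 b2)" "last zs \<in> bar k (sd d a2 b1 b2)"
      using inside hl mem_sd by auto
    then show ?thesis unfolding Cr_def ev_def connects_def using op2 by blast
  next
    assume e: "c1 d (hd zs) = a2 \<and> c1 d (last zs) = a1"
    then have "hd zs \<in> bar k (sd d a2 b1 b2)" "last zs \<in> bar k (sd d a1 b1 b2)"
      using inside hl mem_sd by auto
    then have "connects (\<omega> \<inter> EE k (rect d a1 a2 b1 b2)) (bar k (sd d a2 b1 b2)) (bar k (sd d a1 b1 b2))"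
      unfolding connects_def using op2 by blast
    then show ?thesis unfolding Cr_def ev_def by (rule connects_sym)
  qed
qed

lemma strip:
  fixes a b N :: int and K :: nat
  assumes op: "open_path (\<omega> \<inter> slab_edges k U0) xs"
    and N: "1 \<le> N" and K: "2 \<le> K"
    and pq: "p < length xs" "q < length xs" "c1 d (xs ! p) \<le> a" "a + N \<le> c1 d (xs ! q)"
    and tv: "\<forall>v\<in>set xs. in_slab k v \<and> b \<le> c2 d v \<and> c2 d v \<le> b + int K * N"
  shows "(\<exists>i<K-1. Cr k d a (a+N) (b + int i * N) (b + int (i+2) * N) \<omega>) \<or>
         (\<exists>i<K. Cr k (\<not> d) (b + int i * N) (b + int (i+1) * N) a (a+N) \<omega>)"
proof -
  have g1: "\<bar>c1 d u - c1 d v\<bar> \<le> 1" if "adj k u v" for u v using adj_c[OF that] by simp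
  have g2: "\<bar>c2 d u - c2 d v\<bar> \<le> 1" if "adj k u v" for u v using adj_c[OF that] by simp
  obtain ys where ys: "open_path (\<omega> \<inter> slab_edges k U0) ys" "set ys \<subseteq> set xs"
    "(c1 d (hd ys) = a \<and> c1 d (last ys) = a + N) \<or> (c1 d (hd ys) = a + N \<and> c1 d (last ys) = a)"
    "\<forall>v\<in>set ys. a \<le> c1 d v \<and> c1 d v \<le> a + N"
    using subpath[OF op g1 pq(1,2,3) _ pq(4)] N by auto
  have ne: "ys \<noteq> []" using ys(1) open_path_def by blast
  define Y where "Y = c2 d ` set ys"
  have finY: "finite Y" and neY: "Y \<noteq> {}" unfolding Y_def using ne by auto
  define lo where "lo = Min Y"
  define hi where "hi = Max Y"
  have loY: "lo \<in> Y" and hiY: "hi \<in> Y" unfolding lo_def hi_def using finY neY by auto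
  have lo_le: "lo \<le> c2 d v" and hi_ge: "c2 d v \<le> hi" if "v \<in> set ys" for v
    unfolding lo_def hi_def Y_def using finY that by (auto simp: Y_def)
  have ysin: "in_slab k v \<and> b \<le> c2 d v \<and> c2 d v \<le> b + int K * N" if "v \<in> set ys" for v
    using tv ys(2) that by blast
  have blo: "b \<le> lo" and hib: "hi \<le> b + int K * N" using loY hiY ysin unfolding Y_def by auto
  define i0 where "i0 = nat ((lo - b) div N)"
  have i0a: "int i0 * N \<le> lo - b"
  proof -
    have "0 \<le> (lo - b) div N" using blo N by (simp add: pos_imp_zdiv_nonneg_iff)
    then have "int i0 = (lo - b) div N" unfolding i0_def by simp
    moreover have "(lo - b) div N * N \<le> lo - b"
    proof -
      have "0 \<le> (lo - b) mod N" using N by simp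
      moreover have "(lo - b) div N * N + (lo - b) mod N = lo - b" by (rule div_mult_mod_eq)
      ultimately show ?thesis by linarith
    qed
    ultimately show ?thesis by simp
  qed
  have i0b: "lo - b < (int i0 + 1) * N"
  proof -
    have "0 \<le> (lo - b) div N" using blo N by (simp add: pos_imp_zdiv_nonneg_iff)
    then have "int i0 = (lo - b) div N" unfolding i0_def by simp
    moreover have "lo - b < ((lo - b) div N + 1) * N"
    proof -
      have "(lo - b) mod N < N" using N by simp
      moreover have "(lo - b) div N * N + (lo - b) mod N = lo - b" by (rule div_mult_mod_eq)
      ultimately have "lo - b < (lo - b) div N * N + N" by linarith
      then show ?thesis by (simp add: distrib_right)
    qed
    ultimately show ?thesis by simp
  qed
  define i where "i = min i0 (K - 2)"
  show ?thesis
  proof (cases "hi \<le> b + int (i + 2) * N")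
    case True
    have "int i * N \<le> int i0 * N" unfolding i_def using N by (intro mult_right_mono) auto
    then have ins: "\<forall>v\<in>set ys. in_slab k v \<and> a \<le> c1 d v \<and> c1 d v \<le> a + N \<and>
        b + int i * N \<le> c2 d v \<and> c2 d v \<le> b + int (i+2) * N"
    proof -
      assume m: "int i * N \<le> int i0 * N"
      show ?thesis
      proof
        fix v assume v: "v \<in> set ys"
        have "lo \<le> c2 d v" "c2 d v \<le> hi" using lo_le[OF v] hi_ge[OF v] by auto
        moreover have "in_slab k v" using ysin[OF v] by simp
        moreover have "a \<le> c1 d v \<and> c1 d v \<le> a + N" using ys(4) v by blast
        ultimately show "in_slab k v \<and> a \<le> c1 d v \<and> c1 d v \<le> a + N \<and>
          b + int i * N \<le> c2 d v \<and> c2 d v \<le> b + int (i+2) * N"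
          using m i0a True by linarith
      qed
    qed
    have "Cr k d a (a+N) (b + int i * N) (b + int (i+2) * N) \<omega>"
      by (rule cr_from_path[OF ys(1) ins ys(3)])
    moreover have "i < K - 1" unfolding i_def using K by auto
    ultimately show ?thesis by blast
  next
    case False
    have ii0: "i = i0"
    proof (rule ccontr)
      assume "i \<noteq> i0"
      then have "i = K - 2" unfolding i_def by auto
      then have "int (i + 2) = int K" using K by simp
      then show False using False hib by simp
    qed
    have iK: "i0 + 2 < K"
    proof (rule ccontr)
      assume "\<not> i0 + 2 < K"
      then have "int K * N \<le> int (i + 2) * N" using ii0 N by (intro mult_right_mono) auto
      then show False using False hib by simp
    qed
    obtain vl where vl: "vl \<in> set ys" "c2 d vl = lo" using loY unfolding Y_def by auto
    obtain vh where vh: "vh \<in> set ys" "c2 d vh = hi" using hiY unfolding Y_def by auto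
    obtain pl where pl: "pl < length ys" "ys ! pl = vl" using vl(1) by (metis in_set_conv_nth)
    obtain ph where ph: "ph < length ys" "ys ! ph = vh" using vh(1) by (metis in_set_conv_nth)
    have s1: "c2 d (ys ! pl) \<le> b + int (i0 + 1) * N" using pl vl i0b by (simp add: algebra_simps)
    have s2: "b + int (i0 + 1) * N \<le> b + int (i0 + 2) * N" using N by simp
    have s3: "b + int (i0 + 2) * N \<le> c2 d (ys ! ph)" using ph vh False ii0 by simp
    obtain zs where zs: "open_path (\<omega> \<inter> slab_edges k U0) zs" "set zs \<subseteq> set ys"
      "(c2 d (hd zs) = b + int (i0 + 1) * N \<and> c2 d (last zs) = b + int (i0 + 2) * N) \<or>
       (c2 d (hd zs) = b + int (i0 + 2) * N \<and> c2 d (last zs) = b + int (i0 + 1) * N)"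
      "\<forall>v\<in>set zs. b + int (i0 + 1) * N \<le> c2 d v \<and> c2 d v \<le> b + int (i0 + 2) * N"
      using subpath[OF ys(1) g2 pl(1) ph(1) s1 s2 s3] by blast
    have "Cr k (\<not> d) (b + int (i0 + 1) * N) (b + int (i0 + 1 + 1) * N) a (a+N) \<omega>"
      by (rule cr_from_path[OF zs(1)]) (use zs ys ysin in \<open>auto simp: c12_neg\<close>)
    moreover have "i0 + 1 < K" using iK by simp
    ultimately show ?thesis by blast
  qed
qed


definition Sev :: "nat \<Rightarrow> bool \<Rightarrow> int \<Rightarrow> int \<Rightarrow> int \<Rightarrow> nat \<Rightarrow> vtx set set \<Rightarrow> bool" where
  "Sev k d a N b K \<omega> = ((\<exists>i<K-1. Cr k d a (a+N) (b + int i * N) (b + int (i+2) * N) \<omega>) \<or>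
         (\<exists>i<K. Cr k (\<not> d) (b + int i * N) (b + int (i+1) * N) a (a+N) \<omega>))"

lemma rect_neg: "rect (\<not> d) a1 a2 b1 b2 = rect d b1 b2 a1 a2"
  unfolding rect_def by auto

lemma Cr_sub: "rect d a1 a2 b1 b2 \<subseteq> T' \<Longrightarrow> Cr k d a1 a2 b1 b2 (\<omega> \<inter> EE k T') = Cr k d a1 a2 b1 b2 \<omega>"
  unfolding Cr_def by (rule ev_sub)

lemma Sev_local:
  assumes N: "1 \<le> N"
  shows "Sev k d a N b K (\<omega> \<inter> EE k (rect d a (a+N) b (b + int K * N))) = Sev k d a N b K \<omega>"
proof -
  let ?T = "rect d a (a+N) b (b + int K * N)"
  have s1: "rect d a (a+N) (b + int i * N) (b + int (i+2) * N) \<subseteq> ?T" if "i < K - 1" for i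
  proof (rule rect_mono)
    have "int i * N \<ge> 0" using N by simp
    then show "b \<le> b + int i * N" by simp
    have "int (i+2) * N \<le> int K * N" using that N by (intro mult_right_mono) auto
    then show "b + int (i+2) * N \<le> b + int K * N" by simp
  qed auto
  have s2: "rect (\<not> d) (b + int i * N) (b + int (i+1) * N) a (a+N) \<subseteq> ?T" if "i < K" for i
    unfolding rect_neg
  proof (rule rect_mono)
    have "int i * N \<ge> 0" using N by simp
    then show "b \<le> b + int i * N" by simp
    have "int (i+1) * N \<le> int K * N" using that N by (intro mult_right_mono) auto
    then show "b + int (i+1) * N \<le> b + int K * N" by simp
  qed auto
  show ?thesis unfolding Sev_def using Cr_sub[OF s1] Cr_sub[OF s2] by auto
qed

lemma Cr_prob':
  assumes "0 \<le> p" "p \<le> 1" "0 \<le> h" "h \<le> 2 * N" "finite F" "EE k (rect d a1 a2 b1 b2) \<subseteq> F"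
    "a2 = a1 + N" "b2 = b1 + h"
  shows "perc_prob p F (Cr k d a1 a2 b1 b2) \<le> fN k p N"
  using Cr_prob[OF assms(1-5)] assms(6-8) by simp

lemma fN_nonneg: "0 \<le> p \<Longrightarrow> p \<le> 1 \<Longrightarrow> 0 \<le> fN k p N"
  unfolding fN_def f_cross_def by (rule perc_nonneg)

lemma Sev_prob:
  assumes p: "0 \<le> p" "p \<le> 1" and N: "1 \<le> N" and F: "finite F"
    and sub: "EE k (rect d a (a+N) b (b + int K * N)) \<subseteq> F"
  shows "perc_prob p F (Sev k d a N b K) \<le> real (2 * K) * fN k p N"
proof -
  let ?T = "rect d a (a+N) b (b + int K * N)"
  let ?A = "\<lambda>i. Cr k d a (a+N) (b + int i * N) (b + int (i+2) * N)"
  let ?B = "\<lambda>i. Cr k (\<not> d) (b + int i * N) (b + int (i+1) * N) a (a+N)"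
  have s1: "EE k (rect d a (a+N) (b + int i * N) (b + int (i+2) * N)) \<subseteq> F" if "i < K - 1" for i
  proof -
    have "rect d a (a+N) (b + int i * N) (b + int (i+2) * N) \<subseteq> ?T"
    proof (rule rect_mono)
      have "int i * N \<ge> 0" using N by simp
      then show "b \<le> b + int i * N" by simp
      have "int (i+2) * N \<le> int K * N" using that N by (intro mult_right_mono) auto
      then show "b + int (i+2) * N \<le> b + int K * N" by simp
    qed auto
    then show ?thesis using sub EE_mono by blast
  qed
  have s2: "EE k (rect (\<not> d) (b + int i * N) (b + int (i+1) * N) a (a+N)) \<subseteq> F" if "i < K" for i
  proof -
    have "rect (\<not> d) (b + int i * N) (b + int (i+1) * N) a (a+N) \<subseteq> ?T"
      unfolding rect_neg
    proof (rule rect_mono)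
      have "int i * N \<ge> 0" using N by simp
      then show "b \<le> b + int i * N" by simp
      have "int (i+1) * N \<le> int K * N" using that N by (intro mult_right_mono) auto
      then show "b + int (i+1) * N \<le> b + int K * N" by simp
    qed auto
    then show ?thesis using sub EE_mono by blast
  qed
  have "perc_prob p F (Sev k d a N b K) = perc_prob p F (\<lambda>\<omega>. (\<exists>i\<in>{..<K-1}. ?A i \<omega>) \<or> (\<exists>i\<in>{..<K}. ?B i \<omega>))"
    by (rule arg_cong[of _ _ "perc_prob p F"]) (auto simp: Sev_def fun_eq_iff)
  also have "\<dots> \<le> perc_prob p F (\<lambda>\<omega>. \<exists>i\<in>{..<K-1}. ?A i \<omega>) + perc_prob p F (\<lambda>\<omega>. \<exists>i\<in>{..<K}. ?B i \<omega>)"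
    by (rule perc_or[OF F p])
  also have "\<dots> \<le> (\<Sum>i\<in>{..<K-1}. perc_prob p F (?A i)) + (\<Sum>i\<in>{..<K}. perc_prob p F (?B i))"
    by (intro add_mono perc_ex p F) auto
  also have "\<dots> \<le> (\<Sum>i\<in>{..<K-1}. fN k p N) + (\<Sum>i\<in>{..<K}. fN k p N)"
  proof (intro add_mono sum_mono)
    fix i assume "i \<in> {..<K-1}"
    then show "perc_prob p F (?A i) \<le> fN k p N"
      by (intro Cr_prob'[OF p _ _ F s1]) (use N in \<open>auto simp: algebra_simps\<close>)
  next
    fix i assume "i \<in> {..<K}"
    then show "perc_prob p F (?B i) \<le> fN k p N"
      by (intro Cr_prob'[OF p _ _ F s2]) (use N in \<open>auto simp: algebra_simps\<close>)
  qed
  also have "\<dots> \<le> real (2 * K) * fN k p N"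
  proof -
    have "real (K - 1) + real K \<le> real (2 * K)" by simp
    then have "(real (K - 1) + real K) * fN k p N \<le> real (2 * K) * fN k p N"
      using fN_nonneg[OF p] by (intro mult_right_mono) auto
    then show ?thesis by (simp add: algebra_simps)
  qed
  finally show ?thesis .
qed

lemma renorm:
  assumes p: "0 \<le> p" "p \<le> 1" and N: "1 \<le> N"
  shows "fN k p (3 * N) \<le> 144 * (fN k p N)^2"
proof -
  define T where "T = {0..3*N} \<times> {0..2*(3*N)}"
  define A where "A = ({0::int} \<times> {0..2*(3*N)})"
  define B where "B = ({3*N} \<times> {0..2*(3*N)})"
  define F where "F = EE k T"
  define E1 where "E1 = EE k (rect True 0 (0+N) 0 (0 + int 6 * N))"
  define E2 where "E2 = EE k (rect True (2*N) (2*N+N) 0 (0 + int 6 * N))"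
  define SL where "SL = Sev k True 0 N 0 6"
  define SR where "SR = Sev k True (2*N) N 0 6"
  have finF: "finite F" unfolding F_def T_def by (intro finite_EE) simp
  have finE: "finite E1" "finite E2" unfolding E1_def E2_def by (auto intro: finite_EE finite_rect)
  have sub1: "E1 \<subseteq> F" unfolding E1_def F_def T_def
    by (rule EE_mono) (use N in \<open>auto simp: rect_def\<close>)
  have sub2: "E2 \<subseteq> F" unfolding E2_def F_def T_def
    by (rule EE_mono) (use N in \<open>auto simp: rect_def\<close>)
  have disj: "E1 \<inter> E2 = {}" unfolding E1_def E2_def EE_def
  proof (rule slab_edges_disj)
    show "bar k (rect True 0 (0 + N) 0 (0 + int 6 * N)) \<inter> bar k (rect True (2 * N) (2 * N + N) 0 (0 + int 6 * N)) = {}"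
      using N unfolding mem_rect[symmetric] by (auto simp: mem_rect)
  qed
  have key: "SL \<omega> \<and> SR \<omega>" if h1: "\<omega> \<subseteq> F" and h2: "connects \<omega> (bar k A) (bar k B)" for \<omega>
  proof -
    obtain xs where xs: "open_path \<omega> xs" "hd xs \<in> bar k A" "last xs \<in> bar k B"
      using h2 unfolding connects_def by blast
    have eq: "\<omega> \<inter> slab_edges k (bar k T) = \<omega>" using h1 unfolding F_def EE_def by blast
    have op: "open_path (\<omega> \<inter> slab_edges k (bar k T)) xs" using xs(1) eq by simp
    have ne: "xs \<noteq> []" using xs(1) open_path_def by blast
    have "A \<subseteq> T" unfolding A_def T_def using N by auto
    then have hdT: "hd xs \<in> bar k T" using xs(2) bar_mono by blast
    have allT: "\<forall>v\<in>set xs. v \<in> bar k T" using path_in[OF op hdT] .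
    have tv: "\<forall>v\<in>set xs. in_slab k v \<and> 0 \<le> c2 True v \<and> c2 True v \<le> 0 + int 6 * N"
    proof
      fix v assume "v \<in> set xs"
      then have "v \<in> bar k T" using allT by blast
      then show "in_slab k v \<and> 0 \<le> c2 True v \<and> c2 True v \<le> 0 + int 6 * N"
        unfolding T_def by (cases v) (auto simp: bar_iff c2_def in_slab_def)
    qed
    have p0: "0 < length xs" "xs ! 0 = hd xs" using ne by (auto simp: hd_conv_nth)
    have pl: "length xs - 1 < length xs" "xs ! (length xs - 1) = last xs" using ne by (auto simp: last_conv_nth)
    have c_hd: "c1 True (hd xs) = 0" using xs(2) unfolding A_def by (cases "hd xs") (auto simp: bar_iff c1_def)
    have c_last: "c1 True (last xs) = 3 * N" using xs(3) unfolding B_def by (cases "last xs") (auto simp: bar_iff c1_def)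
    have "SL \<omega>" unfolding SL_def Sev_def
      by (rule strip[OF op N _ p0(1) pl(1) _ _ tv]) (use c_hd c_last p0 pl N in auto)
    moreover have "SR \<omega>" unfolding SR_def Sev_def
      by (rule strip[OF op N _ p0(1) pl(1) _ _ tv]) (use c_hd c_last p0 pl N in auto)
    ultimately show ?thesis ..
  qed
  have locL: "SL (\<omega> \<inter> E1) = SL \<omega>" for \<omega>
    unfolding SL_def E1_def using Sev_local[OF N, of k True 0 0 6 \<omega>] by simp
  have locR: "SR (\<omega> \<inter> E2) = SR \<omega>" for \<omega>
    unfolding SR_def E2_def using Sev_local[OF N, of k True "2*N" 0 6 \<omega>] by simp
  have "fN k p (3 * N) = perc_prob p F (\<lambda>\<omega>. connects \<omega> (bar k A) (bar k B))"
    unfolding fN_Q Q_def F_def T_def A_def B_def ..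
  also have "\<dots> \<le> perc_prob p F (\<lambda>\<omega>. SL \<omega> \<and> SR \<omega>)"
    by (rule perc_mono[OF finF p]) (use key in blast)
  also have "\<dots> = perc_prob p F (\<lambda>\<omega>. (\<lambda>\<omega>'. SL (\<omega>' \<inter> E1) \<and> SR (\<omega>' \<inter> E2)) (\<omega> \<inter> (E1 \<union> E2)))"
  proof -
    have "(\<lambda>\<omega>. SL \<omega> \<and> SR \<omega>) = (\<lambda>\<omega>. (\<lambda>\<omega>'. SL (\<omega>' \<inter> E1) \<and> SR (\<omega>' \<inter> E2)) (\<omega> \<inter> (E1 \<union> E2)))"
    proof (rule ext)
      fix \<omega>
      have "\<omega> \<inter> (E1 \<union> E2) \<inter> E1 = \<omega> \<inter> E1" "\<omega> \<inter> (E1 \<union> E2) \<inter> E2 = \<omega> \<inter> E2" by auto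
      then show "(SL \<omega> \<and> SR \<omega>) = (\<lambda>\<omega>'. SL (\<omega>' \<inter> E1) \<and> SR (\<omega>' \<inter> E2)) (\<omega> \<inter> (E1 \<union> E2))"
        using locL locR by simp
    qed
    then show ?thesis by simp
  qed
  also have "\<dots> = perc_prob p (E1 \<union> E2) (\<lambda>\<omega>'. SL (\<omega>' \<inter> E1) \<and> SR (\<omega>' \<inter> E2))"
    by (rule perc_local[OF finF]) (use sub1 sub2 in auto)
  also have "\<dots> = perc_prob p E1 SL * perc_prob p E2 SR"
    by (rule perc_prod[OF finE disj])
  also have "\<dots> \<le> (real (2 * 6) * fN k p N) * (real (2 * 6) * fN k p N)"
  proof (rule mult_mono)
    show "perc_prob p E1 SL \<le> real (2 * 6) * fN k p N" unfolding SL_def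
      by (rule Sev_prob[OF p N finE(1)]) (simp add: E1_def)
    show "perc_prob p E2 SR \<le> real (2 * 6) * fN k p N" unfolding SR_def
      by (rule Sev_prob[OF p N finE(2)]) (simp add: E2_def)
    show "0 \<le> real (2 * 6) * fN k p N" using fN_nonneg[OF p] by simp
    show "0 \<le> perc_prob p E2 SR" by (rule perc_nonneg[OF p])
  qed
  also have "\<dots> = 144 * (fN k p N)^2" by (simp add: power2_eq_square)
  finally show ?thesis .
qed

lemma iterate:
  assumes p: "0 \<le> p" "p \<le> 1" and n: "1 \<le> n" and small: "144 * fN k p n \<le> 1/2"
  shows "144 * fN k p (3^j * n) \<le> (1/2) ^ (2^j)"
proof (induction j)
  case 0
  then show ?case using small by simp
next
  case (Suc j)
  have N: "1 \<le> 3^j * n"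
  proof -
    have "(1::int) \<le> 3^j" by simp
    then have "1 * 1 \<le> 3^j * n" using n by (intro mult_mono) auto
    then show ?thesis by simp
  qed
  have "144 * fN k p (3^Suc j * n) = 144 * fN k p (3 * (3^j * n))" by (simp add: mult.assoc)
  also have "\<dots> \<le> 144 * (144 * (fN k p (3^j * n))^2)" using renorm[OF p N] by simp
  also have "\<dots> = (144 * fN k p (3^j * n))^2" by (simp add: power2_eq_square)
  also have "\<dots> \<le> ((1/2) ^ (2^j))^2"
    using Suc.IH fN_nonneg[OF p] by (intro power_mono) auto
  also have "\<dots> = (1/2) ^ (2^Suc j)" by (simp add: power_mult[symmetric] mult.commute)
  finally show ?case .
qed


definition Th :: "nat \<Rightarrow> real \<Rightarrow> int \<Rightarrow> int \<Rightarrow> real" where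
  "Th k p z m = perc_prob p (EE k (box m)) (\<lambda>\<omega>. connects \<omega> {(0, 0, z)} (vboundary k (bar k (box m))))"

lemma conn_Th: "conn_prob k p m = Th k p 0 m"
  unfolding conn_prob_def Th_def EE_def ..

lemma vbdry_box:
  assumes "v \<in> vboundary k (bar k (box m))"
  shows "v \<in> bar k (box m)" "\<bar>fst v\<bar> = m \<or> \<bar>fst (snd v)\<bar> = m"
proof -
  show vin: "v \<in> bar k (box m)" using assms unfolding vboundary_def by blast
  obtain u where u: "adj k v u" "u \<notin> bar k (box m)" using assms unfolding vboundary_def by blast
  have "in_slab k u" using adj_c(4)[OF u(1)] .
  then have "\<not> (\<bar>fst u\<bar> \<le> m \<and> \<bar>fst (snd u)\<bar> \<le> m)" using u(2)
    by (cases u) (auto simp: bar_iff box_def in_slab_def abs_le_iff)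
  moreover have "\<bar>fst v\<bar> \<le> m" "\<bar>fst (snd v)\<bar> \<le> m" using vin
    by (cases v, auto simp: bar_iff box_def abs_le_iff)+
  moreover have "\<bar>fst v - fst u\<bar> \<le> 1" "\<bar>fst (snd v) - fst (snd u)\<bar> \<le> 1" using adj_coord[OF u(1)] by auto
  ultimately show "\<bar>fst v\<bar> = m \<or> \<bar>fst (snd v)\<bar> = m" by linarith
qed

lemma rect_box:
  assumes "a = 0 \<or> a = -N" "0 \<le> N"
  shows "rect d a (a + N) (-N) (-N + int 2 * N) \<subseteq> box N"
  using assms unfolding rect_def box_def by auto

lemma th_le_f:
  assumes p: "0 \<le> p" "p \<le> 1" and N: "1 \<le> N" and z: "0 \<le> z" "z \<le> int k"
  shows "Th k p z N \<le> 16 * fN k p N"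
proof -
  define F where "F = EE k (box N)"
  define og where "og = ((0::int), (0::int), z)"
  define V where "V = vboundary k (bar k (box N))"
  have finF: "finite F" unfolding F_def box_def by (intro finite_EE) simp
  let ?S = "\<lambda>d a. Sev k d a N (-N) 2"
  have key: "?S True 0 \<omega> \<or> ?S True (-N) \<omega> \<or> ?S False 0 \<omega> \<or> ?S False (-N) \<omega>"
    if h1: "\<omega> \<subseteq> F" and h2: "connects \<omega> {og} V" for \<omega>
  proof -
    obtain xs where xs: "open_path \<omega> xs" "hd xs = og" "last xs \<in> V"
      using h2 unfolding connects_def by blast
    have eq: "\<omega> \<inter> slab_edges k (bar k (box N)) = \<omega>" using h1 unfolding F_def EE_def by blast
    have op: "open_path (\<omega> \<inter> slab_edges k (bar k (box N))) xs" using xs(1) eq by simp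
    have ne: "xs \<noteq> []" using xs(1) open_path_def by blast
    have hdT: "hd xs \<in> bar k (box N)" using xs(2) N z unfolding og_def by (simp add: bar_iff box_def)
    have allT: "\<forall>v\<in>set xs. v \<in> bar k (box N)" using path_in[OF op hdT] .
    have tv: "\<forall>v\<in>set xs. in_slab k v \<and> -N \<le> c2 d v \<and> c2 d v \<le> -N + int 2 * N" for d
    proof
      fix v assume "v \<in> set xs"
      then have "v \<in> bar k (box N)" using allT by blast
      then show "in_slab k v \<and> -N \<le> c2 d v \<and> c2 d v \<le> -N + int 2 * N"
        by (cases v) (auto simp: bar_iff c2_def in_slab_def box_def)
    qed
    have p0: "0 < length xs" "xs ! 0 = og" using ne xs(2) by (auto simp: hd_conv_nth)
    have pl: "length xs - 1 < length xs" "xs ! (length xs - 1) = last xs" using ne by (auto simp: last_conv_nth)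
    have co: "c1 d og = 0" for d unfolding og_def c1_def by simp
    obtain d where d: "\<bar>c1 d (last xs)\<bar> = N"
      using vbdry_box(2)[of "last xs" k N] xs(3) unfolding V_def c1_def by (metis (full_types))
    have N2: "(2::nat) \<le> 2" by simp
    show ?thesis
    proof (cases "c1 d (last xs) = N")
      case True
      have "?S d 0 \<omega>" unfolding Sev_def
        by (rule strip[OF op N N2 p0(1) pl(1) _ _ tv]) (use co p0 pl True in auto)
      then show ?thesis by (cases d) auto
    next
      case False
      then have "c1 d (last xs) = -N" using d by auto
      then have "?S d (-N) \<omega>" unfolding Sev_def
        by (intro strip[OF op N N2 pl(1) p0(1) _ _ tv]) (use co p0 pl in auto)
      then show ?thesis by (cases d) auto
    qed
  qed
  have pS: "perc_prob p F (?S d a) \<le> 4 * fN k p N" if "a = 0 \<or> a = -N" for d a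
  proof -
    have "perc_prob p F (?S d a) \<le> real (2 * 2) * fN k p N"
      by (rule Sev_prob[OF p N finF]) (unfold F_def, rule EE_mono, rule rect_box, use that N in auto)
    then show ?thesis by simp
  qed
  have "Th k p z N = perc_prob p F (\<lambda>\<omega>. connects \<omega> {og} V)"
    unfolding Th_def F_def og_def V_def ..
  also have "\<dots> \<le> perc_prob p F (\<lambda>\<omega>. ?S True 0 \<omega> \<or> ?S True (-N) \<omega> \<or> ?S False 0 \<omega> \<or> ?S False (-N) \<omega>)"
    by (rule perc_mono[OF finF p]) (use key in blast)
  also have "\<dots> \<le> perc_prob p F (?S True 0) + (perc_prob p F (?S True (-N)) +
      (perc_prob p F (?S False 0) + perc_prob p F (?S False (-N))))"
    using perc_or[OF finF p, of "?S True 0" "\<lambda>\<omega>. ?S True (-N) \<omega> \<or> ?S False 0 \<omega> \<or> ?S False (-N) \<omega>"]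
      perc_or[OF finF p, of "?S True (-N)" "\<lambda>\<omega>. ?S False 0 \<omega> \<or> ?S False (-N) \<omega>"]
      perc_or[OF finF p, of "?S False 0" "?S False (-N)"] by linarith
  also have "\<dots> \<le> 16 * fN k p N" using pS[of 0 True] pS[of "-N" True] pS[of 0 False] pS[of "-N" False] by simp
  finally show ?thesis .
qed


lemma perc_disj_sum:
  assumes "finite E" "finite AA"
  shows "(\<Sum>A\<in>AA. perc_prob p E (\<lambda>\<omega>. Cl \<omega> = A \<and> P A \<omega>)) = perc_prob p E (\<lambda>\<omega>. Cl \<omega> \<in> AA \<and> P (Cl \<omega>) \<omega>)"
proof -
  have "(\<Sum>A\<in>AA. perc_prob p E (\<lambda>\<omega>. Cl \<omega> = A \<and> P A \<omega>))
      = (\<Sum>A\<in>AA. \<Sum>\<omega>\<in>Pow E. if Cl \<omega> = A \<and> P A \<omega> then wt p E \<omega> else 0)"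
    using assms(1) by (simp add: perc_prob_ind)
  also have "\<dots> = (\<Sum>\<omega>\<in>Pow E. \<Sum>A\<in>AA. if Cl \<omega> = A \<and> P A \<omega> then wt p E \<omega> else 0)"
    by (rule sum.swap)
  also have "\<dots> = (\<Sum>\<omega>\<in>Pow E. if Cl \<omega> \<in> AA \<and> P (Cl \<omega>) \<omega> then wt p E \<omega> else 0)"
  proof (rule sum.cong[OF refl])
    fix \<omega>
    have "(\<Sum>A\<in>AA. if Cl \<omega> = A \<and> P A \<omega> then wt p E \<omega> else 0)
        = (\<Sum>A\<in>AA. if Cl \<omega> = A then (if P A \<omega> then wt p E \<omega> else 0) else 0)"
      by (rule sum.cong) auto
    also have "\<dots> = (if Cl \<omega> \<in> AA then (if P (Cl \<omega>) \<omega> then wt p E \<omega> else 0) else 0)"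
      using sum.delta'[OF assms(2), of "Cl \<omega>" "\<lambda>A. if P A \<omega> then wt p E \<omega> else 0"] by simp
    finally show "(\<Sum>A\<in>AA. if Cl \<omega> = A \<and> P A \<omega> then wt p E \<omega> else 0)
        = (if Cl \<omega> \<in> AA \<and> P (Cl \<omega>) \<omega> then wt p E \<omega> else 0)" by simp
  qed
  also have "\<dots> = perc_prob p E (\<lambda>\<omega>. Cl \<omega> \<in> AA \<and> P (Cl \<omega>) \<omega>)"
    using assms(1) by (simp add: perc_prob_ind)
  finally show ?thesis .
qed

lemma seg_open:
  assumes "i \<le> j" "j < length xs" "\<And>l. i \<le> l \<Longrightarrow> l < j \<Longrightarrow> {xs ! l, xs ! Suc l} \<in> \<eta>"
  shows "open_path \<eta> (seg xs i j)"
  unfolding open_path_def seg_def using assms by (auto simp del: upt_Suc)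

lemma path_extend:
  assumes "connects \<eta> {a} {u}" "{u, v} \<in> \<eta>"
  shows "connects \<eta> {a} {v}"
proof -
  obtain ys where ys: "open_path \<eta> ys" "hd ys = a" "last ys = u" using assms(1) unfolding connects_def by blast
  have ne: "ys \<noteq> []" using ys(1) open_path_def by blast
  have "open_path \<eta> (ys @ [v])"
    unfolding open_path_def
  proof (intro conjI allI impI)
    fix i assume i: "Suc i < length (ys @ [v])"
    show "{(ys @ [v]) ! i, (ys @ [v]) ! Suc i} \<in> \<eta>"
    proof (cases "Suc i < length ys")
      case True
      then show ?thesis using open_pathD[OF ys(1) True] by (simp add: nth_append)
    next
      case False
      then have "Suc i = length ys" using i by simp
      then have li: "i = length ys - 1" by simp
      then have "(ys @ [v]) ! i = u" "(ys @ [v]) ! Suc i = v"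
        using ys(3) ne \<open>Suc i = length ys\<close> by (auto simp: nth_append last_conv_nth)
      then show ?thesis using assms(2) by simp
    qed
  qed simp
  then show ?thesis unfolding connects_def using ys ne by (intro exI[of _ "ys @ [v]"]) auto
qed

lemma connects_single: "connects \<eta> {a} {a}"
  unfolding connects_def open_path_def by (intro exI[of _ "[a]"]) auto

lemma prefix_cl:
  assumes "open_path \<eta> xs" "hd xs = a" "i < length xs"
  shows "connects \<eta> {a} {xs ! i}"
proof -
  have ne: "xs \<noteq> []" using assms(1) open_path_def by blast
  note sp = seg_props[OF assms(1) le0 assms(3)]
  show ?thesis unfolding connects_def using sp(1,2,3) assms(2) ne
    by (intro exI[of _ "seg xs 0 i"]) (auto simp: hd_conv_nth)
qed

definition DA :: "vtx set set \<Rightarrow> vtx set \<Rightarrow> vtx set set" where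
  "DA D A = {e \<in> D. e \<inter> A \<noteq> {}}"

lemma cl_restrict1:
  assumes "{v. connects (\<omega> \<inter> D) {a} {v}} = A"
  shows "{v. connects (\<omega> \<inter> DA D A \<inter> D) {a} {v}} = A"
proof
  show "{v. connects (\<omega> \<inter> DA D A \<inter> D) {a} {v}} \<subseteq> A"
    using assms connects_mono[of "\<omega> \<inter> DA D A \<inter> D" _ _ "\<omega> \<inter> D"] by blast
  show "A \<subseteq> {v. connects (\<omega> \<inter> DA D A \<inter> D) {a} {v}}"
  proof
    fix v assume "v \<in> A"
    then have "connects (\<omega> \<inter> D) {a} {v}" using assms by blast
    then obtain xs where xs: "open_path (\<omega> \<inter> D) xs" "hd xs = a" "last xs = v"
      unfolding connects_def by blast
    have "open_path (\<omega> \<inter> DA D A \<inter> D) xs"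
      unfolding open_path_def
    proof (intro conjI allI impI)
      show "xs \<noteq> []" using xs(1) open_path_def by blast
      fix i assume i: "Suc i < length xs"
      have e: "{xs ! i, xs ! Suc i} \<in> \<omega> \<inter> D" using open_pathD[OF xs(1) i] .
      have "xs ! i \<in> A" using prefix_cl[OF xs(1,2), of i] i assms by auto
      then show "{xs ! i, xs ! Suc i} \<in> \<omega> \<inter> DA D A \<inter> D" using e unfolding DA_def by auto
    qed
    then show "v \<in> {v. connects (\<omega> \<inter> DA D A \<inter> D) {a} {v}}"
      unfolding connects_def using xs by blast
  qed
qed

lemma cl_restrict2:
  assumes "{v. connects (\<omega> \<inter> DA D A \<inter> D) {a} {v}} = A"
  shows "{v. connects (\<omega> \<inter> D) {a} {v}} = A"
proof
  show "A \<subseteq> {v. connects (\<omega> \<inter> D) {a} {v}}"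
    using assms connects_mono[of "\<omega> \<inter> DA D A \<inter> D" _ _ "\<omega> \<inter> D"] by blast
  show "{v. connects (\<omega> \<inter> D) {a} {v}} \<subseteq> A"
  proof
    fix v assume "v \<in> {v. connects (\<omega> \<inter> D) {a} {v}}"
    then obtain xs where xs: "open_path (\<omega> \<inter> D) xs" "hd xs = a" "last xs = v"
      unfolding connects_def by blast
    have ne: "xs \<noteq> []" using xs(1) open_path_def by blast
    have "\<forall>i. i < length xs \<longrightarrow> xs ! i \<in> A"
    proof (intro allI)
      fix i show "i < length xs \<longrightarrow> xs ! i \<in> A"
      proof (induction i)
        case 0
        have "a \<in> A" using assms connects_single by blast
        then show ?case using xs(2) ne by (auto simp: hd_conv_nth)
      next
        case (Suc i)
        show ?case
        proof
          assume si: "Suc i < length xs"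
          then have xi: "xs ! i \<in> A" using Suc.IH by simp
          have e: "{xs ! i, xs ! Suc i} \<in> \<omega> \<inter> D" using open_pathD[OF xs(1) si] .
          then have e2: "{xs ! i, xs ! Suc i} \<in> \<omega> \<inter> DA D A \<inter> D" using xi unfolding DA_def by auto
          have "connects (\<omega> \<inter> DA D A \<inter> D) {a} {xs ! i}" using xi assms by blast
          then have "connects (\<omega> \<inter> DA D A \<inter> D) {a} {xs ! Suc i}" using path_extend e2 by blast
          then show "xs ! Suc i \<in> A" using assms by blast
        qed
      qed
    qed
    then show "v \<in> A" using xs(3) ne by (auto simp: last_conv_nth)
  qed
qed

lemma finite_box: "finite (box m)" unfolding box_def by simp

lemma simon_lieb:
  fixes M L z :: int
  assumes p: "0 \<le> p" "p \<le> 1" and M: "1 \<le> M" and L: "1 \<le> L" and z: "0 \<le> z" "z \<le> int k"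
    and g0: "0 \<le> g"
    and g: "\<And>x. x \<in> vboundary k (bar k (box M)) \<Longrightarrow>
      perc_prob p (EE k (box (M+L))) (\<lambda>\<omega>. connects \<omega> {x} (vboundary k (bar k (box (M+L))))) \<le> g"
  shows "Th k p z (M+L) \<le> real (card (vboundary k (bar k (box M)))) * Th k p z M * g"
proof -
  define D where "D = EE k (box M)"
  define F where "F = EE k (box (M+L))"
  define og where "og = ((0::int), (0::int), z)"
  define V where "V = vboundary k (bar k (box (M+L)))"
  define Bd where "Bd = vboundary k (bar k (box M))"
  define Cl where "Cl = (\<lambda>\<omega>. {v. connects (\<omega> \<inter> D) {og} {v}})"
  define AA where "AA = Pow (bar k (box M))"
  have finD: "finite D" unfolding D_def by (intro finite_EE finite_box)
  have finF: "finite F" unfolding F_def by (intro finite_EE finite_box)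
  have finB: "finite (bar k (box M))" by (intro finite_bar finite_box)
  have finAA: "finite AA" unfolding AA_def using finB by simp
  have finBd: "finite Bd" unfolding Bd_def vboundary_def using finB by (auto intro: finite_subset)
  have boxsub: "box M \<subseteq> box (M+L)" unfolding box_def using L by auto
  have DF: "D \<subseteq> F" unfolding D_def F_def by (rule EE_mono[OF boxsub])
  have ogB: "og \<in> bar k (box M)" unfolding og_def using M z by (simp add: bar_iff box_def)
  have clsub: "Cl \<omega> \<subseteq> bar k (box M)" for \<omega>
  proof
    fix v assume "v \<in> Cl \<omega>"
    then obtain xs where xs: "open_path (\<omega> \<inter> D) xs" "hd xs = og" "last xs = v"
      unfolding Cl_def connects_def by blast
    have ne: "xs \<noteq> []" using xs(1) open_path_def by blast
    have "\<forall>u\<in>set xs. u \<in> bar k (box M)"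
      by (rule path_in[of \<omega>]) (use xs ogB in \<open>simp_all add: D_def EE_def\<close>)
    then show "v \<in> bar k (box M)" using xs(3) ne by auto
  qed
  have ogcl: "og \<in> Cl \<omega>" for \<omega> unfolding Cl_def using connects_single by blast
  have eqv: "Cl (\<omega> \<inter> DA D A) = A \<longleftrightarrow> Cl \<omega> = A" for \<omega> A
    unfolding Cl_def using cl_restrict1[of \<omega> D og A] cl_restrict2[of \<omega> D A og] by blast
  define Ev where "Ev = (\<lambda>A x \<omega>. x \<in> A \<and> Cl \<omega> = A \<and> connects (\<omega> \<inter> (F - DA D A)) {x} V)"
  have dec: "\<exists>A\<in>AA. \<exists>x\<in>Bd. Ev A x \<omega>" if h1: "\<omega> \<subseteq> F" and h2: "connects \<omega> {og} V" for \<omega>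
  proof -
    define A where "A = Cl \<omega>"
    obtain xs where xs: "open_path \<omega> xs" "hd xs = og" "last xs \<in> V"
      using h2 unfolding connects_def by blast
    have ne: "xs \<noteq> []" using xs(1) open_path_def by blast
    define I where "I = {i. i < length xs \<and> xs ! i \<in> A}"
    have finI: "finite I" unfolding I_def by simp
    have I0: "0 \<in> I" unfolding I_def A_def using ogcl ne xs(2) by (auto simp: hd_conv_nth)
    define j where "j = Max I"
    have jI: "j \<in> I" unfolding j_def using finI I0 Max_in by blast
    have jmax: "xs ! l \<notin> A" if "j < l" "l < length xs" for l
    proof
      assume "xs ! l \<in> A"
      then have "l \<in> I" unfolding I_def using that by auto
      then have "l \<le> j" unfolding j_def using finI by simp
      then show False using that by simp
    qed
    have lastA: "last xs \<notin> A"
    proof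
      assume "last xs \<in> A"
      then have "last xs \<in> bar k (box M)" using clsub unfolding A_def by blast
      moreover have "\<bar>fst (last xs)\<bar> = M + L \<or> \<bar>fst (snd (last xs))\<bar> = M + L"
        using vbdry_box(2) xs(3) unfolding V_def by blast
      ultimately show False using L by (cases "last xs") (auto simp: bar_iff box_def)
    qed
    have jl: "Suc j < length xs"
    proof -
      have "j < length xs" "xs ! j \<in> A" using jI unfolding I_def by auto
      moreover have "j \<noteq> length xs - 1" using lastA \<open>xs ! j \<in> A\<close> ne by (auto simp: last_conv_nth)
      ultimately show ?thesis by linarith
    qed
    define x where "x = xs ! j"
    define y where "y = xs ! Suc j"
    have xA: "x \<in> A" unfolding x_def using jI I_def by simp
    have yA: "y \<notin> A" unfolding y_def using jmax[of "Suc j"] jl by simp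
    have e: "{x, y} \<in> \<omega>" unfolding x_def y_def using open_pathD[OF xs(1) jl] .
    then have eF: "{x, y} \<in> F" using h1 by blast
    then have xyF: "x \<in> bar k (box (M+L))" "y \<in> bar k (box (M+L))" "adj k x y"
      unfolding F_def EE_def slab_edges_iff by auto
    have xcl: "connects (\<omega> \<inter> D) {og} {x}" using xA unfolding A_def Cl_def by blast
    have eD: "{x, y} \<notin> D"
    proof
      assume "{x, y} \<in> D"
      then have "connects (\<omega> \<inter> D) {og} {y}" using path_extend[OF xcl] e by blast
      then show False using yA unfolding A_def Cl_def by blast
    qed
    have xM: "x \<in> bar k (box M)" using xA clsub unfolding A_def by blast
    have yM: "y \<notin> bar k (box M)"
    proof
      assume "y \<in> bar k (box M)"
      then have "{x, y} \<in> D" unfolding D_def EE_def slab_edges_iff using xM xyF by auto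
      then show False using eD by simp
    qed
    have xBd: "x \<in> Bd" unfolding Bd_def vboundary_def using xM xyF(3) yM by blast
    have rest: "connects (\<omega> \<inter> (F - DA D A)) {x} V"
    proof -
      have op: "open_path (\<omega> \<inter> (F - DA D A)) (seg xs j (length xs - 1))"
      proof (rule seg_open)
        show "j \<le> length xs - 1" using jl by simp
        show "length xs - 1 < length xs" using ne by simp
        fix l assume l: "j \<le> l" "l < length xs - 1"
        have el: "{xs ! l, xs ! Suc l} \<in> \<omega>" using open_pathD[OF xs(1)] l by simp
        have "{xs ! l, xs ! Suc l} \<notin> DA D A"
        proof (cases "l = j")
          case True
          then show ?thesis using eD unfolding DA_def x_def y_def by simp
        next
          case False
          then have "xs ! l \<notin> A" "xs ! Suc l \<notin> A" using jmax l by auto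
          then show ?thesis unfolding DA_def by auto
        qed
        then show "{xs ! l, xs ! Suc l} \<in> \<omega> \<inter> (F - DA D A)" using el h1 by blast
      qed
      have "hd (seg xs j (length xs - 1)) = x" "last (seg xs j (length xs - 1)) = last xs"
        using seg_props(2,3)[OF xs(1), of j "length xs - 1"] jl ne unfolding x_def
        by (auto simp: last_conv_nth)
      then show ?thesis unfolding connects_def using op xs(3)
        by (intro exI[of _ "seg xs j (length xs - 1)"]) simp
    qed
    have "A \<in> AA" unfolding AA_def A_def using clsub by blast
    then show ?thesis unfolding Ev_def using xBd xA rest A_def by blast
  qed
  have trm: "perc_prob p F (Ev A x) \<le> perc_prob p D (\<lambda>\<omega>. Cl \<omega> = A \<and> x \<in> A) * g"
    if x: "x \<in> Bd" for A x
  proof -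
    define DAA where "DAA = DA D A"
    have DAAsub: "DAA \<subseteq> D" unfolding DAA_def DA_def by blast
    have finDAA: "finite DAA" using finD DAAsub finite_subset by blast
    have finR: "finite (F - DAA)" using finF by simp
    have disj: "DAA \<inter> (F - DAA) = {}" by blast
    have Fu: "F = DAA \<union> (F - DAA)" using DAAsub DF by blast
    define G1 where "G1 = (\<lambda>\<eta>. Cl \<eta> = A \<and> x \<in> A)"
    define R where "R = (\<lambda>\<eta>. connects \<eta> {x} V)"
    have pw: "Ev A x = (\<lambda>\<omega>. G1 (\<omega> \<inter> DAA) \<and> R (\<omega> \<inter> (F - DAA)))"
      unfolding Ev_def G1_def R_def DAA_def using eqv by (auto simp: fun_eq_iff)
    have "perc_prob p F (Ev A x) = perc_prob p (DAA \<union> (F - DAA)) (\<lambda>\<omega>. G1 (\<omega> \<inter> DAA) \<and> R (\<omega> \<inter> (F - DAA)))"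
      using pw Fu by simp
    also have "\<dots> = perc_prob p DAA G1 * perc_prob p (F - DAA) R"
      by (rule perc_prod[OF finDAA finR disj])
    also have "perc_prob p DAA G1 = perc_prob p D (\<lambda>\<omega>. G1 (\<omega> \<inter> DAA))"
      by (rule perc_local[OF finD DAAsub, symmetric])
    also have "\<dots> = perc_prob p D (\<lambda>\<omega>. Cl \<omega> = A \<and> x \<in> A)"
      unfolding G1_def DAA_def using eqv by simp
    also have "perc_prob p (F - DAA) R = perc_prob p F (\<lambda>\<omega>. R (\<omega> \<inter> (F - DAA)))"
      by (rule perc_local[OF finF, symmetric]) blast
    also have "\<dots> \<le> perc_prob p F R"
      by (rule perc_mono[OF finF p]) (unfold R_def, erule connects_mono, auto)
    also have "\<dots> \<le> g" using g[of x] x unfolding R_def F_def V_def Bd_def by simp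
    finally show ?thesis using perc_nonneg[OF p] by (simp add: mult_left_mono)
  qed
  have "Th k p z (M+L) = perc_prob p F (\<lambda>\<omega>. connects \<omega> {og} V)"
    unfolding Th_def F_def og_def V_def ..
  also have "\<dots> \<le> perc_prob p F (\<lambda>\<omega>. \<exists>A\<in>AA. \<exists>x\<in>Bd. Ev A x \<omega>)"
    by (rule perc_mono[OF finF p]) (rule dec)
  also have "\<dots> \<le> (\<Sum>A\<in>AA. perc_prob p F (\<lambda>\<omega>. \<exists>x\<in>Bd. Ev A x \<omega>))"
    by (rule perc_ex[OF p finAA finF])
  also have "\<dots> \<le> (\<Sum>A\<in>AA. \<Sum>x\<in>Bd. perc_prob p F (Ev A x))"
    by (intro sum_mono perc_ex[OF p finBd finF])
  also have "\<dots> \<le> (\<Sum>A\<in>AA. \<Sum>x\<in>Bd. perc_prob p D (\<lambda>\<omega>. Cl \<omega> = A \<and> x \<in> A) * g)"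
    by (intro sum_mono trm)
  also have "\<dots> = (\<Sum>x\<in>Bd. (\<Sum>A\<in>AA. perc_prob p D (\<lambda>\<omega>. Cl \<omega> = A \<and> x \<in> A)) * g)"
    by (subst sum.swap) (simp add: sum_distrib_right)
  also have "\<dots> = (\<Sum>x\<in>Bd. perc_prob p D (\<lambda>\<omega>. Cl \<omega> \<in> AA \<and> x \<in> Cl \<omega>) * g)"
    using perc_disj_sum[OF finD finAA, of p Cl "\<lambda>A \<omega>. _ \<in> A"] by simp
  also have "\<dots> \<le> (\<Sum>x\<in>Bd. Th k p z M * g)"
  proof (intro sum_mono mult_right_mono g0)
    fix x assume x: "x \<in> Bd"
    have "perc_prob p D (\<lambda>\<omega>. Cl \<omega> \<in> AA \<and> x \<in> Cl \<omega>) \<le> perc_prob p D (\<lambda>\<omega>. connects \<omega> {og} Bd)"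
    proof (rule perc_mono[OF finD p])
      fix \<omega> assume "Cl \<omega> \<in> AA \<and> x \<in> Cl \<omega>"
      then have "connects (\<omega> \<inter> D) {og} {x}" unfolding Cl_def by blast
      then show "connects \<omega> {og} Bd" by (rule connects_mono) (use x in auto)
    qed
    then show "perc_prob p D (\<lambda>\<omega>. Cl \<omega> \<in> AA \<and> x \<in> Cl \<omega>) \<le> Th k p z M"
      unfolding Th_def D_def og_def Bd_def .
  qed
  also have "\<dots> = real (card (vboundary k (bar k (box M)))) * Th k p z M * g"
    unfolding Bd_def by simp
  finally show ?thesis .
qed


lemma vboundary_bij:
  assumes "bij \<psi>" "\<And>u v. adj k (\<psi> u) (\<psi> v) = adj k u v"
  shows "vboundary k (\<psi> ` U) = \<psi> ` vboundary k U"
proof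
  show "vboundary k (\<psi> ` U) \<subseteq> \<psi> ` vboundary k U"
  proof
    fix v assume v: "v \<in> vboundary k (\<psi> ` U)"
    then obtain u where u: "u \<in> U" "v = \<psi> u" unfolding vboundary_def by blast
    obtain w where w: "adj k v w" "w \<notin> \<psi> ` U" using v unfolding vboundary_def by blast
    obtain w' where w': "w = \<psi> w'" using assms(1) by (metis bij_pointE)
    have "adj k u w'" using w(1) u(2) w' assms(2) by simp
    moreover have "w' \<notin> U" using w(2) w' by blast
    ultimately have "u \<in> vboundary k U" unfolding vboundary_def using u(1) by blast
    then show "v \<in> \<psi> ` vboundary k U" using u(2) by blast
  qed
  show "\<psi> ` vboundary k U \<subseteq> vboundary k (\<psi> ` U)"
  proof
    fix v assume "v \<in> \<psi> ` vboundary k U"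
    then obtain u w where u: "v = \<psi> u" "u \<in> U" "adj k u w" "w \<notin> U" unfolding vboundary_def by blast
    have "adj k v (\<psi> w)" using u assms(2) by simp
    moreover have "\<psi> w \<notin> \<psi> ` U" using u(4) assms(1) by (simp add: bij_is_inj inj_image_mem_iff)
    ultimately show "v \<in> vboundary k (\<psi> ` U)" unfolding vboundary_def using u by blast
  qed
qed

lemma Th_tr:
  fixes x1 y1 :: int
  shows "perc_prob p (EE k ({x1 - L..x1 + L} \<times> {y1 - L..y1 + L}))
     (\<lambda>\<omega>. connects \<omega> {(x1, y1, zx)} (vboundary k (bar k ({x1 - L..x1 + L} \<times> {y1 - L..y1 + L})))) = Th k p zx L"
proof -
  define \<psi> where "\<psi> = lift (tr x1 y1)"
  have b: "bij \<psi>" unfolding \<psi>_def by (rule lift_bij[OF tr_bij])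
  have a: "adj k (\<psi> u) (\<psi> v) = adj k u v" for u v
    unfolding \<psi>_def by (rule lift_adj) (simp add: tr_def)
  have S: "tr x1 y1 ` box L = {x1 - L..x1 + L} \<times> {y1 - L..y1 + L}"
    unfolding box_def tr_img by (simp add: algebra_simps)
  have bS: "bar k ({x1 - L..x1 + L} \<times> {y1 - L..y1 + L}) = \<psi> ` bar k (box L)"
    unfolding \<psi>_def lift_bar S ..
  have e: "EE k ({x1 - L..x1 + L} \<times> {y1 - L..y1 + L}) = imE \<psi> (EE k (box L))"
    unfolding EE_def bS by (rule slab_edges_bij[OF b a])
  have o: "{(x1, y1, zx)} = \<psi> ` {(0, 0, zx)}" unfolding \<psi>_def lift_def tr_def by simp
  have vb: "vboundary k (bar k ({x1 - L..x1 + L} \<times> {y1 - L..y1 + L})) = \<psi> ` vboundary k (bar k (box L))"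
    unfolding bS by (rule vboundary_bij[OF b a])
  have fin: "finite (EE k (box L))" by (intro finite_EE finite_box)
  show ?thesis
    unfolding e o vb perc_sym[OF bij_is_inj[OF b] fin] connects_bij[OF b] Th_def ..
qed

lemma first_exit:
  fixes M L x1 y1 zx :: int
  assumes M: "1 \<le> M" and L: "1 \<le> L" and x: "(x1, y1, zx) \<in> bar k (box M)"
    and h1: "\<omega> \<subseteq> EE k (box (M+L))"
    and h2: "connects \<omega> {(x1, y1, zx)} (vboundary k (bar k (box (M+L))))"
  shows "connects (\<omega> \<inter> EE k ({x1 - L..x1 + L} \<times> {y1 - L..y1 + L})) {(x1, y1, zx)}
           (vboundary k (bar k ({x1 - L..x1 + L} \<times> {y1 - L..y1 + L})))"
proof -
  define S where "S = {x1 - L..x1 + L} \<times> {y1 - L..y1 + L}"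
  define out where "out = (\<lambda>v::vtx. L \<le> \<bar>fst v - x1\<bar> \<or> L \<le> \<bar>fst (snd v) - y1\<bar>)"
  obtain xs where xs: "open_path \<omega> xs" "hd xs = (x1, y1, zx)" "last xs \<in> vboundary k (bar k (box (M+L)))"
    using h2 unfolding connects_def by blast
  have ne: "xs \<noteq> []" using xs(1) open_path_def by blast
  have ws: "\<omega> \<subseteq> slab_edges k (bar k (box (M+L)))" using h1 unfolding EE_def .
  have xbox: "\<bar>x1\<bar> \<le> M" "\<bar>y1\<bar> \<le> M" using x by (auto simp: bar_iff box_def)
  have outlast: "out (last xs)"
    using vbdry_box(2)[OF xs(3)] xbox unfolding out_def by auto
  have xin: "(x1, y1, zx) \<in> bar k (box (M+L))" using x L by (auto simp: bar_iff box_def)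
  have op0: "open_path (\<omega> \<inter> slab_edges k (bar k (box (M+L)))) xs" using xs(1) ws
    by (metis inf.absorb1)
  have allin: "\<forall>v\<in>set xs. v \<in> bar k (box (M+L))" using path_in[OF op0] xs(2) xin by simp
  define j where "j = (LEAST j. j < length xs \<and> out (xs ! j))"
  have ex: "length xs - 1 < length xs \<and> out (xs ! (length xs - 1))" using ne outlast by (simp add: last_conv_nth)
  have jP: "j < length xs \<and> out (xs ! j)" unfolding j_def by (rule LeastI[of "\<lambda>j. j < length xs \<and> out (xs ! j)", OF ex])
  have before: "\<not> out (xs ! i)" if "i < j" for i
  proof
    assume "out (xs ! i)"
    moreover have "i < length xs" using that jP by simp
    ultimately have "j \<le> i" unfolding j_def by (simp add: Least_le)
    then show False using that by simp
  qed
  have notout0: "\<not> out (xs ! 0)" using xs(2) ne L unfolding out_def by (simp add: hd_conv_nth)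
  have j0: "0 < j" using jP notout0 by (cases j) auto
  have inS_before: "xs ! i \<in> bar k S" if "i < j" for i
  proof -
    have "xs ! i \<in> bar k (box (M+L))" using allin that jP by simp
    then show ?thesis using before[OF that] unfolding out_def S_def
      by (cases "xs ! i") (auto simp: bar_iff)
  qed
  have adjj: "adj k (xs ! (j - 1)) (xs ! j)"
    using path_adj[OF xs(1) ws, of "j - 1"] jP j0 by simp
  have prev: "\<bar>fst (xs ! (j-1)) - x1\<bar> < L" "\<bar>fst (snd (xs ! (j-1))) - y1\<bar> < L"
    using before[of "j - 1"] j0 unfolding out_def by auto
  have dj: "\<bar>fst (xs ! (j-1)) - fst (xs ! j)\<bar> \<le> 1" "\<bar>fst (snd (xs ! (j-1))) - fst (snd (xs ! j))\<bar> \<le> 1"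
    using adj_coord[OF adjj] by auto
  have jc: "\<bar>fst (xs ! j) - x1\<bar> \<le> L" "\<bar>fst (snd (xs ! j)) - y1\<bar> \<le> L"
    using prev dj by linarith+
  have jslab: "in_slab k (xs ! j)" using adj_c(4)[OF adjj] .
  have jS: "xs ! j \<in> bar k S" using jc jslab unfolding S_def
    by (cases "xs ! j") (auto simp: bar_iff in_slab_def abs_le_iff)
  have jvb: "xs ! j \<in> vboundary k (bar k S)"
  proof -
    obtain a b c where abc: "xs ! j = (a, b, c)" by (cases "xs ! j")
    have c: "0 \<le> c" "c \<le> int k" using jslab abc by (auto simp: in_slab_def)
    have o: "L \<le> \<bar>a - x1\<bar> \<or> L \<le> \<bar>b - y1\<bar>" using jP abc unfolding out_def by simp
    have aL: "\<bar>a - x1\<bar> \<le> L" "\<bar>b - y1\<bar> \<le> L" using jc abc by auto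
    show ?thesis
    proof (cases "L \<le> \<bar>a - x1\<bar>")
      case True
      define w where "w = ((if a \<ge> x1 then a + 1 else a - 1), b, c)"
      have "adj k (xs ! j) w" unfolding abc w_def adj_def in_slab_def using c by auto
      moreover have "w \<notin> bar k S" unfolding w_def S_def using True aL by (auto simp: bar_iff)
      ultimately show ?thesis unfolding vboundary_def using jS by blast
    next
      case False
      then have "L \<le> \<bar>b - y1\<bar>" using o by simp
      define w where "w = (a, (if b \<ge> y1 then b + 1 else b - 1), c)"
      have "adj k (xs ! j) w" unfolding abc w_def adj_def in_slab_def using c by auto
      moreover have "w \<notin> bar k S" unfolding w_def S_def using \<open>L \<le> \<bar>b - y1\<bar>\<close> aL by (auto simp: bar_iff)
      ultimately show ?thesis unfolding vboundary_def using jS by blast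
    qed
  qed
  note sp = seg_props[OF xs(1) le0, of j] 
  have segS: "set (seg xs 0 j) \<subseteq> bar k S"
  proof
    fix v assume "v \<in> set (seg xs 0 j)"
    then obtain l where l: "l \<le> j" "v = xs ! l" using sp(4) jP by auto
    then show "v \<in> bar k S" using inS_before jS by (cases "l = j") auto
  qed
  have a1: "open_path (\<omega> \<inter> slab_edges k (bar k S)) (seg xs 0 j)"
    by (rule path_restrict[OF _ ws segS]) (use sp jP in simp)
  have a2: "hd (seg xs 0 j) = (x1, y1, zx)" using sp(2) jP xs(2) ne by (simp add: hd_conv_nth)
  have a3: "last (seg xs 0 j) = xs ! j" using sp(3) jP by simp
  have "connects (\<omega> \<inter> EE k S) {(x1, y1, zx)} (vboundary k (bar k S))"
    unfolding connects_def EE_def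
    by (rule exI[of _ "seg xs 0 j"]) (simp only: a1 a2 a3 jvb singleton_iff simp_thms)
  then show ?thesis unfolding S_def .
qed

lemma exit_bound:
  fixes M L :: int
  assumes p: "0 \<le> p" "p \<le> 1" and M: "1 \<le> M" and L: "1 \<le> L" and x: "x \<in> bar k (box M)"
  shows "perc_prob p (EE k (box (M+L))) (\<lambda>\<omega>. connects \<omega> {x} (vboundary k (bar k (box (M+L)))))
     \<le> Th k p (snd (snd x)) L"
proof -
  obtain x1 y1 zx where xe: "x = (x1, y1, zx)" by (cases x)
  define S where "S = {x1 - L..x1 + L} \<times> {y1 - L..y1 + L}"
  have Ssub: "S \<subseteq> box (M+L)" using x xe unfolding S_def by (auto simp: bar_iff box_def)
  have finF: "finite (EE k (box (M+L)))" by (intro finite_EE finite_box)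
  have "perc_prob p (EE k (box (M+L))) (\<lambda>\<omega>. connects \<omega> {x} (vboundary k (bar k (box (M+L)))))
     \<le> perc_prob p (EE k (box (M+L))) (\<lambda>\<omega>. connects (\<omega> \<inter> EE k S) {x} (vboundary k (bar k S)))"
    by (rule perc_mono[OF finF p]) (unfold xe S_def, rule first_exit[OF M L], use x xe in auto)
  also have "\<dots> = perc_prob p (EE k S) (\<lambda>\<omega>. connects \<omega> {x} (vboundary k (bar k S)))"
    by (rule perc_local[OF finF EE_mono[OF Ssub]])
  also have "\<dots> = Th k p zx L" unfolding xe S_def by (rule Th_tr)
  finally show ?thesis using xe by simp
qed


lemma final_real:
  fixes a :: "nat \<Rightarrow> real"
  assumes b: "0 < b" and C: "\<And>m. 1 \<le> m \<Longrightarrow> a m \<le> C * exp (- b * real m)"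
    and lt1: "\<And>m. 1 \<le> m \<Longrightarrow> a m < 1"
  shows "\<exists>c>0. \<forall>m\<ge>1. a m \<le> exp (- c * real m)"
proof -
  obtain m0 :: nat where m0: "ln (max C 1) * 2 / b < real m0" using reals_Archimedean2 by blast
  have m0': "max C 1 \<le> exp (b * real m0 / 2)"
  proof -
    have "ln (max C 1) * 2 < real m0 * b" using m0 pos_divide_less_eq[OF b] by blast
    moreover have "b * real m0 = real m0 * b" by (rule mult.commute)
    ultimately have "ln (max C 1) < b * real m0 / 2" by linarith
    have "max C 1 = exp (ln (max C 1))" by simp
    also have "\<dots> \<le> exp (b * real m0 / 2)"
      by (rule exp_le_cancel_iff[THEN iffD2]) (use \<open>ln (max C 1) < b * real m0 / 2\<close> in linarith)
    finally show ?thesis .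
  qed
  define S where "S = insert (1/2) (a ` {1..<m0})"
  have finS: "finite S" and neS: "S \<noteq> {}" unfolding S_def by auto
  define Q where "Q = Max S"
  have QS: "Q \<in> S" unfolding Q_def using finS neS by simp
  have Q1: "Q < 1" using QS lt1 unfolding S_def by auto
  have Q0: "1/2 \<le> Q" unfolding Q_def by (rule Max_ge[OF finS]) (simp add: S_def)
  have aQ: "a m \<le> Q" if "1 \<le> m" "m < m0" for m
    unfolding Q_def by (rule Max_ge[OF finS]) (use that in \<open>simp add: S_def\<close>)
  define c0 where "c0 = - ln Q / real m0"
  define c where "c = min (b/2) c0"
  have lnQ: "ln Q < 0" by (rule ln_less_zero) (use Q1 Q0 in linarith)+
  show ?thesis
  proof (cases "m0 = 0")
    case True
    have "a m \<le> exp (- (b/2) * real m)" if "1 \<le> m" for m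
    proof -
      have "exp (b * real m0 / 2) \<le> exp (b * real m / 2)" using True b by simp
      then have "C \<le> exp (b * real m / 2)" using m0' by linarith
      have "a m \<le> C * exp (- b * real m)" using C that by simp
      also have "\<dots> \<le> exp (b * real m / 2) * exp (- b * real m)"
        by (rule mult_right_mono) (use \<open>C \<le> exp (b * real m / 2)\<close> in auto)
      also have "\<dots> = exp (- (b/2) * real m)" by (simp add: exp_add[symmetric] field_simps)
      finally show ?thesis .
    qed
    then show ?thesis using b by (intro exI[of _ "b/2"]) auto
  next
    case False
    have "0 < real m0" using False by simp
    then have "ln Q / real m0 < 0" using lnQ by (simp add: divide_neg_pos)
    then have c0p: "0 < c0" unfolding c0_def by simp
    have cp: "0 < c" unfolding c_def using c0p b by simp
    have "a m \<le> exp (- c * real m)" if m: "1 \<le> m" for m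
    proof (cases "m < m0")
      case True
      have "a m \<le> Q" using aQ m True by simp
      also have "Q = exp (- c0 * real m0)" unfolding c0_def using False Q0 by simp
      also have "\<dots> \<le> exp (- c * real m)"
      proof -
        have "c * real m \<le> c0 * real m0" unfolding c_def using True c0p
          by (intro mult_mono) auto
        then show ?thesis by simp
      qed
      finally show ?thesis .
    next
      case False
      have "C \<le> exp (b * real m / 2)"
      proof -
        have "exp (b * real m0 / 2) \<le> exp (b * real m / 2)" using False b by simp
        then show ?thesis using m0' by linarith
      qed
      have "a m \<le> C * exp (- b * real m)" using C m by simp
      also have "\<dots> \<le> exp (b * real m / 2) * exp (- b * real m)"
        by (rule mult_right_mono) (use \<open>C \<le> exp (b * real m / 2)\<close> in auto)
      also have "\<dots> = exp (- (b/2) * real m)" by (simp add: exp_add[symmetric] field_simps)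
      also have "\<dots> \<le> exp (- c * real m)"
      proof -
        have "c \<le> b/2" unfolding c_def by simp
        then have "c * real m \<le> (b/2) * real m" by (rule mult_right_mono) simp
        then show ?thesis by simp
      qed
      finally show ?thesis .
    qed
    then show ?thesis using cp by blast
  qed
qed


definition Tht :: "nat \<Rightarrow> real \<Rightarrow> int \<Rightarrow> real" where
  "Tht k p L = (\<Sum>z\<in>{0..int k}. Th k p z L)"

lemma Th_nonneg: "0 \<le> p \<Longrightarrow> p \<le> 1 \<Longrightarrow> 0 \<le> Th k p z L"
  unfolding Th_def by (rule perc_nonneg)

lemma Th_le1: "0 \<le> p \<Longrightarrow> p \<le> 1 \<Longrightarrow> Th k p z L \<le> 1"
  unfolding Th_def by (rule perc_le1) (auto intro: finite_EE finite_box)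

lemma Tht_nonneg: "0 \<le> p \<Longrightarrow> p \<le> 1 \<Longrightarrow> 0 \<le> Tht k p L"
  unfolding Tht_def by (intro sum_nonneg Th_nonneg)

lemma Tht_le: "0 \<le> p \<Longrightarrow> p \<le> 1 \<Longrightarrow> Tht k p L \<le> real (Suc k)"
proof -
  assume p: "0 \<le> p" "p \<le> 1"
  have "Tht k p L \<le> (\<Sum>z\<in>{0..int k}. 1)" unfolding Tht_def by (intro sum_mono Th_le1 p)
  also have "\<dots> = real (Suc k)" by simp
  finally show ?thesis .
qed

lemma Th_le_Tht: "0 \<le> p \<Longrightarrow> p \<le> 1 \<Longrightarrow> 0 \<le> z \<Longrightarrow> z \<le> int k \<Longrightarrow> Th k p z L \<le> Tht k p L"
  unfolding Tht_def by (rule member_le_sum) (auto intro: Th_nonneg)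

lemma Tht_sub:
  assumes p: "0 \<le> p" "p \<le> 1" and M: "1 \<le> M" and L: "1 \<le> L"
  shows "Tht k p (M+L) \<le> real (card (vboundary k (bar k (box M)))) * Tht k p M * Tht k p L"
proof -
  let ?c = "real (card (vboundary k (bar k (box M))))"
  have each: "Th k p z (M+L) \<le> ?c * Th k p z M * Tht k p L" if z: "z \<in> {0..int k}" for z
  proof (rule simon_lieb[OF p M L])
    show "0 \<le> z" "z \<le> int k" using z by auto
    show "0 \<le> Tht k p L" by (rule Tht_nonneg[OF p])
    fix x assume x: "x \<in> vboundary k (bar k (box M))"
    then have xb: "x \<in> bar k (box M)" by (rule vbdry_box(1))
    have "perc_prob p (EE k (box (M + L))) (\<lambda>\<omega>. connects \<omega> {x} (vboundary k (bar k (box (M + L)))))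
        \<le> Th k p (snd (snd x)) L" by (rule exit_bound[OF p M L xb])
    also have "\<dots> \<le> Tht k p L"
    proof -
      have zx: "0 \<le> snd (snd x) \<and> snd (snd x) \<le> int k" using xb by (cases x) (simp add: bar_iff)
      then show ?thesis using Th_le_Tht[OF p] by blast
    qed
    finally show "perc_prob p (EE k (box (M + L))) (\<lambda>\<omega>. connects \<omega> {x} (vboundary k (bar k (box (M + L))))) \<le> Tht k p L" .
  qed
  have "Tht k p (M+L) = (\<Sum>z\<in>{0..int k}. Th k p z (M+L))" by (simp add: Tht_def)
  also have "\<dots> \<le> (\<Sum>z\<in>{0..int k}. ?c * Th k p z M * Tht k p L)"
    by (rule sum_mono) (rule each)
  also have "\<dots> = ?c * Tht k p M * Tht k p L"
    by (simp add: Tht_def[of k p M] sum_distrib_left sum_distrib_right mult.assoc)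
  finally show ?thesis .
qed

lemma card_vb:
  assumes "0 \<le> M"
  shows "real (card (vboundary k (bar k (box M)))) \<le> real (Suc k) * (2 * real_of_int M + 1)^2"
proof -
  have fin: "finite (bar k (box M))" by (intro finite_bar finite_box)
  have cv: "card (vboundary k (bar k (box M))) \<le> card (bar k (box M))"
    by (rule card_mono[OF fin]) (auto simp: vboundary_def)
  have "bar k (box M) = (\<lambda>((x, y), z). (x, y, z)) ` (box M \<times> {0..int k})"
    unfolding bar_def by force
  also have "card \<dots> \<le> card (box M \<times> {0..int k})" by (rule card_image_le) (simp add: finite_box)
  also have "\<dots> = card (box M) * Suc k"
  proof -
    have "nat (int k + 1) = Suc k" by linarith
    then show ?thesis by (simp add: card_cartesian_product)
  qed
  also have "card (box M) = nat (2 * M + 1) * nat (2 * M + 1)"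
    unfolding box_def by (simp add: card_cartesian_product)
  finally have "card (bar k (box M)) \<le> nat (2 * M + 1) * nat (2 * M + 1) * Suc k" .
  then have "card (vboundary k (bar k (box M))) \<le> nat (2 * M + 1) * nat (2 * M + 1) * Suc k"
    using cv by linarith
  then have "real (card (vboundary k (bar k (box M)))) \<le> real (nat (2 * M + 1) * nat (2 * M + 1) * Suc k)"
    by linarith
  also have "\<dots> = real (Suc k) * (2 * real_of_int M + 1)^2"
    using assms by (simp add: power2_eq_square of_nat_nat algebra_simps)
  finally show ?thesis .
qed

lemma decay:
  assumes p: "0 \<le> p" "p \<le> 1" and M: "1 \<le> M"
    and q: "real (card (vboundary k (bar k (box M)))) * Tht k p M \<le> 1/2"
  shows "1 \<le> r \<Longrightarrow> Tht k p (int t * M + r) \<le> (1/2)^t * real (Suc k)"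
proof (induction t)
  case 0
  then show ?case using Tht_le[OF p] by simp
next
  case (Suc t)
  have L: "1 \<le> int t * M + r" using Suc.prems M by (simp add: add_increasing)
  have "Tht k p (int (Suc t) * M + r) = Tht k p (M + (int t * M + r))" by (simp add: algebra_simps)
  also have "\<dots> \<le> real (card (vboundary k (bar k (box M)))) * Tht k p M * Tht k p (int t * M + r)"
    by (rule Tht_sub[OF p M L])
  also have "\<dots> \<le> 1/2 * ((1/2)^t * real (Suc k))"
    by (rule mult_mono[OF q Suc.IH[OF Suc.prems]]) (auto intro: Tht_nonneg[OF p])
  finally show ?case by simp
qed


lemma pow5: "5 \<le> j \<Longrightarrow> 5 * j \<le> (2::nat) ^ j"
proof (induction j rule: dec_induct)
  case base
  then show ?case by simp
next
  case (step j)
  have "5 \<le> 5 * j" using step.hyps by simp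
  then have "5 \<le> (2::nat) ^ j" using step.IH by linarith
  then show ?case using step.IH by simp
qed

lemma nt:
  fixes n k :: nat
  assumes n: "1 \<le> n"
  shows "\<exists>j. 2 * (k+1)^2 * (2 * 3^j * n + 1)^2 \<le> 9 * 2^(2^j)"
proof -
  define A where "A = (k+1)^2 * n^2"
  define j where "j = A + 8"
  have h0: "1 \<le> 3^j * n" using n by (simp add: Suc_le_eq)
  have h1: "2 * 3^j * n + 1 \<le> 3^(Suc j) * n" using h0 by simp
  have h2: "(2 * 3^j * n + 1)^2 \<le> (3^(Suc j) * n)^2" by (rule power_mono[OF h1]) simp
  have e9: "(3::nat)^j * 3^j = 9^j" by (simp add: power_mult_distrib[symmetric])
  have h3: "(3^(Suc j) * n)^2 = 9 * 9^j * n^2"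
    by (simp add: power2_eq_square e9[symmetric] algebra_simps)
  have h4: "(9::nat)^j \<le> 2^(4*j)"
  proof -
    have "(9::nat)^j \<le> 16^j" by (rule power_mono) auto
    also have "(16::nat)^j = 2^(4*j)" by (simp add: power_mult)
    finally show ?thesis .
  qed
  have h5: "A < 2^A" by (rule less_exp)
  have h6: "1 + A + 4 * j \<le> 2^j" using pow5[of j] unfolding j_def by simp
  have h23: "(2 * 3^j * n + 1)^2 \<le> 9 * 9^j * n^2" using h2 h3 by linarith
  have "2 * (k+1)^2 * (2 * 3^j * n + 1)^2 \<le> 2 * (k+1)^2 * (9 * 9^j * n^2)"
    by (rule mult_le_mono2[OF h23])
  also have "\<dots> = 9 * (2 * A * 9^j)" unfolding A_def by (simp add: algebra_simps)
  also have "\<dots> \<le> 9 * (2 * 2^A * 2^(4*j))"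
    using h4 h5 by (intro mult_le_mono2 mult_le_mono) auto
  also have "\<dots> = 9 * 2^(1 + A + 4*j)" by (simp add: power_add)
  also have "\<dots> \<le> 9 * 2^(2^j)" using h6 by (intro mult_le_mono2 power_increasing) auto
  finally show ?thesis by blast
qed

lemma perc_lt1:
  assumes E: "finite E" and p: "0 \<le> p" "p < 1" and A: "\<not> A {}"
  shows "perc_prob p E A < 1"
proof -
  have s: "perc_prob p E A + perc_prob p E (\<lambda>\<omega>. \<not> A \<omega>) = 1"
  proof -
    have "perc_prob p E A + perc_prob p E (\<lambda>\<omega>. \<not> A \<omega>)
        = (\<Sum>\<omega>\<in>Pow E. (if A \<omega> then wt p E \<omega> else 0) + (if \<not> A \<omega> then wt p E \<omega> else 0))"
      unfolding perc_prob_ind[OF E] sum.distrib ..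
    also have "\<dots> = (\<Sum>\<omega>\<in>Pow E. wt p E \<omega>)" by (rule sum.cong) auto
    also have "\<dots> = 1" by (rule sum_wt_one[OF E])
    finally show ?thesis .
  qed
  have "wt p E {} \<le> perc_prob p E (\<lambda>\<omega>. \<not> A \<omega>)"
  proof -
    have "(if \<not> A {} then wt p E {} else 0) \<le> (\<Sum>\<omega>\<in>Pow E. if \<not> A \<omega> then wt p E \<omega> else 0)"
      by (rule member_le_sum) (use E p wt_nonneg in auto)
    then show ?thesis unfolding perc_prob_ind[OF E] using A by simp
  qed
  moreover have "0 < wt p E {}" unfolding wt_def using p by simp
  ultimately show ?thesis using s by linarith
qed

lemma conn_lt1:
  assumes p: "0 \<le> p" "p < 1" and m: "1 \<le> m"
  shows "conn_prob k p m < 1"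
  unfolding conn_prob_def
proof (rule perc_lt1[OF _ p])
  show "finite (slab_edges k (bar k (box m)))" by (intro finite_slab_edges finite_bar finite_box)
  show "\<not> connects {} {(0, 0, 0)} (vboundary k (bar k (box m)))"
  proof
    assume "connects {} {(0, 0, 0)} (vboundary k (bar k (box m)))"
    then obtain xs where xs: "open_path {} xs" "hd xs = (0, 0, 0)" "last xs \<in> vboundary k (bar k (box m))"
      unfolding connects_def by blast
    have ne: "xs \<noteq> []" using xs(1) open_path_def by blast
    have "\<not> Suc 0 < length xs" using open_pathD[OF xs(1), of 0] by auto
    then have "length xs = 1" using ne by (cases xs) auto
    then have "last xs = hd xs" by (cases xs) auto
    then have "(0, 0, 0) \<in> vboundary k (bar k (box m))" using xs by simp
    then show False using vbdry_box(2)[of "(0,0,0)" k m] m by simp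
  qed
qed

lemma perc_p1:
  assumes E: "finite E"
  shows "perc_prob 1 E A = (if A E then 1 else 0)"
proof -
  have "perc_prob 1 E A = (\<Sum>\<omega>\<in>Pow E. if E = \<omega> then (if A \<omega> then 1 else 0) else 0)"
    unfolding perc_prob_ind[OF E]
  proof (rule sum.cong[OF refl])
    fix \<omega> assume w: "\<omega> \<in> Pow E"
    have fin: "finite (E - \<omega>)" using E by simp
    have "card (E - \<omega>) = 0 \<longleftrightarrow> E = \<omega>" using w fin by auto
    then show "(if A \<omega> then wt 1 E \<omega> else 0) = (if E = \<omega> then (if A \<omega> then 1 else 0) else 0)"
      unfolding wt_def by (cases "card (E - \<omega>)") auto
  qed
  also have "\<dots> = (if E \<in> Pow E then (if A E then 1 else 0) else 0)"
    by (rule sum.delta') (simp add: E)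
  also have "\<dots> = (if A E then 1 else 0)" by simp
  finally show ?thesis .
qed

lemma fN_p1:
  assumes N: "1 \<le> N"
  shows "fN k 1 N = 1"
proof -
  define T where "T = {0..N} \<times> {0..2*N}"
  define E where "E = slab_edges k (bar k T)"
  define xs where "xs = map (\<lambda>i. (int i, (0::int), (0::int))) [0..<Suc (nat N)]"
  have finE: "finite E" unfolding E_def T_def by (intro finite_slab_edges finite_bar) simp
  have op: "open_path E xs"
    unfolding open_path_def
  proof (intro conjI allI impI)
    show "xs \<noteq> []" unfolding xs_def by simp
    fix i assume i: "Suc i < length xs"
    then have iN: "int i + 1 \<le> N" unfolding xs_def by simp
    have e: "xs ! i = (int i, 0, 0)" "xs ! Suc i = (int i + 1, 0, 0)" using i unfolding xs_def
      by (auto simp del: upt_Suc)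
    have "(int i, 0, 0) \<in> bar k T" "(int i + 1, 0, 0) \<in> bar k T"
      using iN N unfolding T_def by (auto simp: bar_iff)
    moreover have "adj k (int i, 0, 0) (int i + 1, 0, 0)" unfolding adj_def in_slab_def by simp
    ultimately show "{xs ! i, xs ! Suc i} \<in> E" unfolding E_def e slab_edges_iff by simp
  qed
  have hd: "hd xs = (0, 0, 0)" unfolding xs_def by (simp del: upt_Suc add: hd_map)
  have lst: "last xs = (N, 0, 0)" unfolding xs_def using N by (simp del: upt_Suc add: last_map)
  have "connects E (bar k ({0} \<times> {0..2*N})) (bar k ({N} \<times> {0..2*N}))"
    unfolding connects_def using op hd lst N by (intro exI[of _ xs]) (auto simp: bar_iff)
  then show ?thesis unfolding fN_def f_cross_def E_def[symmetric] T_def[symmetric] perc_p1[OF finE]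
    using E_def T_def by simp
qed


lemma half_pow_exp:
  fixes t :: nat and M :: real and m :: real
  assumes M: "0 < M" and tm: "m \<le> (real t + 1) * M"
  shows "(1/2::real)^t \<le> 2 * exp (- (ln 2 / M) * m)"
proof -
  have e2: "exp (real t * ln 2) = (2::real)^t" by (simp add: exp_of_nat_mult)
  have e: "(1/2::real)^t = exp (- ln 2 * real t)"
  proof -
    have "exp (- ln 2 * real t) = inverse (exp (real t * ln 2))"
      by (simp add: exp_minus[symmetric] mult.commute)
    then show ?thesis using e2 by (simp add: power_one_over inverse_eq_divide)
  qed
  have "m / M \<le> real t + 1" using tm M by (simp add: divide_le_eq)
  then have "- ln 2 * real t \<le> ln 2 - (ln 2 / M) * m"
  proof -
    assume h: "m / M \<le> real t + 1"
    have "(ln 2 / M) * m = ln 2 * (m / M)" by simp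
    also have "\<dots> \<le> ln 2 * (real t + 1)" using h by (intro mult_left_mono) auto
    finally show ?thesis by (simp add: algebra_simps)
  qed
  then have "exp (- ln 2 * real t) \<le> exp (ln 2 - (ln 2 / M) * m)" by simp
  also have "\<dots> = 2 * exp (- (ln 2 / M) * m)" by (simp add: exp_diff exp_minus divide_inverse)
  finally show ?thesis using e by simp
qed

lemma main_decay:
  fixes n :: nat
  assumes p: "0 \<le> p" "p \<le> 1" and n: "1 \<le> n" and f: "fN k p (int n) < 1/288"
  shows "\<exists>c>0. \<forall>m\<ge>1. conn_prob k p (int m) \<le> exp (- c * real m)"
proof -
  have p1: "p < 1"
  proof (rule ccontr)
    assume "\<not> p < 1"
    then have "p = 1" using p by simp
    then have "fN k p (int n) = 1" using fN_p1 n by simp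
    then show False using f by simp
  qed
  have small: "144 * fN k p (int n) \<le> 1/2" using f by simp
  obtain j where j: "2 * (k+1)^2 * (2 * 3^j * n + 1)^2 \<le> 9 * 2^(2^j)" using nt[OF n] by blast
  define M where "M = 3^j * int n"
  have M1: "1 \<le> M"
  proof -
    have "(1::int) \<le> 3^j" by simp
    moreover have "1 \<le> int n" using n by simp
    ultimately have "1 * 1 \<le> (3::int)^j * int n" by (intro mult_mono) auto
    then show ?thesis unfolding M_def by simp
  qed
  have it: "144 * fN k p M \<le> (1/2)^(2^j)" unfolding M_def
    by (rule iterate[OF p _ small]) (use n in simp)
  have f0: "0 \<le> fN k p M" by (rule fN_nonneg[OF p])
  have tht: "Tht k p M \<le> real (Suc k) * (16 * fN k p M)"
  proof -
    have "Tht k p M \<le> (\<Sum>z\<in>{0..int k}. 16 * fN k p M)"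
      unfolding Tht_def by (rule sum_mono) (rule th_le_f[OF p M1], auto)
    then show ?thesis by (simp add: add.commute)
  qed
  have cb: "real (card (vboundary k (bar k (box M)))) \<le> real (Suc k) * (2 * real_of_int M + 1)^2"
    by (rule card_vb) (use M1 in simp)
  have Mr: "2 * real_of_int M + 1 = real (2 * 3^j * n + 1)" unfolding M_def by simp
  have q: "real (card (vboundary k (bar k (box M)))) * Tht k p M \<le> 1/2"
  proof -
    let ?B = "real (Suc k) * (2 * real_of_int M + 1)^2"
    have "real (card (vboundary k (bar k (box M)))) * Tht k p M \<le> ?B * (real (Suc k) * (16 * fN k p M))"
      by (rule mult_mono[OF cb tht]) (auto intro: Tht_nonneg[OF p])
    also have "\<dots> = real (Suc k)^2 * (2 * real_of_int M + 1)^2 * (144 * fN k p M) / 9"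
      by (simp add: power2_eq_square algebra_simps)
    also have "\<dots> \<le> real (Suc k)^2 * (2 * real_of_int M + 1)^2 * (1/2)^(2^j) / 9"
      by (intro divide_right_mono mult_left_mono it) auto
    also have "\<dots> = real (2 * (k+1)^2 * (2 * 3^j * n + 1)^2) / (18 * 2^(2^j))"
      unfolding Mr by (simp add: power_one_over field_simps)
    also have "\<dots> \<le> real (9 * 2^(2^j)) / (18 * 2^(2^j))"
      using j by (intro divide_right_mono) (simp_all only: of_nat_le_iff, simp)
    also have "\<dots> = 1/2" by simp
    finally show ?thesis .
  qed
  define b where "b = ln 2 / real_of_int M"
  have b0: "0 < b" unfolding b_def using M1 by simp
  have bound: "conn_prob k p (int m) \<le> (2 * real (Suc k)) * exp (- b * real m)" if m: "1 \<le> m" for m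
  proof -
    define M' where "M' = nat M"
    have M'M: "int M' = M" unfolding M'_def using M1 by simp
    have M'1: "1 \<le> M'" using M1 M'M by simp
    define t where "t = (m - 1) div M'"
    define r where "r = (m - 1) mod M' + 1"
    have r1: "1 \<le> r" unfolding r_def by simp
    have rM: "r \<le> M'" unfolding r_def using M'1 by (simp add: Suc_le_eq)
    have mt: "m = t * M' + r" unfolding t_def r_def using m by simp
    have im: "int m = int t * M + int r" using mt M'M by simp
    have "conn_prob k p (int m) = Th k p 0 (int m)" by (rule conn_Th)
    also have "\<dots> \<le> Tht k p (int m)" by (rule Th_le_Tht[OF p]) auto
    also have "\<dots> \<le> (1/2)^t * real (Suc k)" unfolding im by (rule decay[OF p M1 q]) (use r1 in simp)
    also have "\<dots> \<le> (2 * exp (- b * real m)) * real (Suc k)"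
    proof (rule mult_right_mono)
      have "real m \<le> (real t + 1) * real_of_int M"
      proof -
        have "real m = real t * real M' + real r" using mt by simp
        also have "\<dots> \<le> real t * real M' + real M'" using rM by simp
        also have "\<dots> = (real t + 1) * real_of_int M"
        proof -
          have "real_of_int M = real M'" using M'M by (metis of_int_of_nat_eq)
          then show ?thesis by (simp add: algebra_simps)
        qed
        finally show ?thesis .
      qed
      then show "(1/2)^t \<le> 2 * exp (- b * real m)" unfolding b_def
        by (intro half_pow_exp) (use M1 in simp_all)
    qed simp
    finally show ?thesis by (simp add: algebra_simps)
  qed
  show ?thesis
    by (rule final_real[OF b0, of "\<lambda>m. conn_prob k p (int m)"]) (use bound conn_lt1[OF p(1) p1] in auto)
qed

theorem mainTheorem10:
  shows "\<exists>c2 > 0. \<forall>(k::nat) \<ge> 1. \<forall>p::real. 0 \<le> p \<and> p \<le> 1 \<longrightarrow>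
     (\<exists>n::nat \<ge> 1. f_cross k p (int n) (2 * int n) < c2) \<longrightarrow>
     (\<exists>c > 0. \<forall>m::nat \<ge> 1. conn_prob k p (int m) \<le> exp (- c * real m))"
proof (rule exI[of _ "1/288"], intro conjI allI impI)
  fix k :: nat and p :: real
  assume k: "1 \<le> k" and p: "0 \<le> p \<and> p \<le> 1" and h: "\<exists>n::nat \<ge> 1. f_cross k p (int n) (2 * int n) < 1/288"
  then obtain n :: nat where n: "1 \<le> n" "f_cross k p (int n) (2 * int n) < 1/288" by blast
  show "\<exists>c > 0. \<forall>m::nat \<ge> 1. conn_prob k p (int m) \<le> exp (- c * real m)"
    by (rule main_decay[of p n]) (use p n in \<open>simp_all add: fN_def\<close>)
qed simp


end
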